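(* Let $\mathcal{W}$ be an AVC. For any $\delta>0$, $\xi>0$ and $P\in\mathcal{P}(\mathcal{X})$ with $\min_xP(x)>0$, there is $c$ sufficiently large such that for every $M$ the set $(T_P^c)^M$ is a list-decodable code of blocklength $Mc$ with $N_M$ messages and list size $L(\mathbf{y}_1^{Mc},\mathcal{V}_1^M)$ for side information $\mathcal{V}_1^M=(\mathcal{V}_1,\dots,\mathcal{V}_M)\in\mathcal{V}_c^M$, where $$N_M\ge\exp\big(Mc(H(X)-\xi)\big),\qquad L(\mathbf{y}_1^{Mc},\mathcal{V}_1^M)\le\exp\Big(c\Big(\sum_{m=1}^M\max_{V\in\mathcal{V}_m(\mathbf{y}^{(m)},\delta)}H(X_m|Y_m)+M\xi\Big)\Big),$$ and maximal probability of list-decoding error $\varepsilon_L\le M\exp(-c\,E_2(\xi))$ with $E_2(\xi)>0$. Here $H(X)$ is computed under $P$, and for $V\in\mathcal{V}_m(\mathbf{y}^{(m)},\delta)$ the conditional entropy is computed under $P(x)V(y|x)$.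
   Context: AVC: $\mathcal{W}=\{W(y|x,s):s\in\mathcal{S}\}$, finite alphabets, product channel law; under nosy noise states may depend on the transmitted codeword. $T_P^c\subset\mathcal{X}^c$ is the set of length-$c$ sequences of type $P$; $(T_P^c)^M$ is the set of concatenations of $M$ such chunks. The $m$-th chunk of $\mathbf{y}$ is $\mathbf{y}^{(m)}=(y_{(m-1)c+1},\dots,y_{mc})$. For chunk $m$, the average channel is $V_m(y|x)=\frac{1}{N(x|\mathbf{x}^{(m)})}\sum_{t=(m-1)c+1}^{mc}W(y|x_t,s_t)\mathbf{1}(x_t=x)$, and the decoder receives a set $\mathcal{V}_m\ni V_m$ of channels from a finite family $\mathcal{V}_c$ with $|\mathcal{V}_c|\le c^v$, $v<\infty$ fixed. $\mathcal{V}_m(\mathbf{y}^{(m)},\delta)=\{V\in\mathcal{V}_m: d_{TV}(T_{\mathbf{y}^{(m)}},\sum_xP(x)V(\cdot|x))<\delta\}$ with $T_{\mathbf{y}^{(m)}}$ the type of $\mathbf{y}^{(m)}$ and $d_{TV}$ total variation distance. A list-decodable code outputs a list of messages; its error is the maximum over messages and jammer strategies of the probability that the transmitted message is not in the list. *)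

theory Defs
  imports Complex_Main
begin

(* Channels: V a b = V(b|a).  AVC: W s a b = W(b|a,s). Natural logarithms (rates in nats). *)

definition stochastic :: "('a::finite \<Rightarrow> 'b::finite \<Rightarrow> real) \<Rightarrow> bool" where
  "stochastic V \<longleftrightarrow> (\<forall>a. (\<forall>b. V a b \<ge> 0) \<and> (\<Sum>b\<in>UNIV. V a b) = 1)"

definition is_AVC :: "('s::finite \<Rightarrow> 'a::finite \<Rightarrow> 'b::finite \<Rightarrow> real) \<Rightarrow> bool" where
  "is_AVC W \<longleftrightarrow> (\<forall>s. stochastic (W s))"

definition is_pd :: "('a::finite \<Rightarrow> real) \<Rightarrow> bool" where
  "is_pd P \<longleftrightarrow> (\<forall>a. P a \<ge> 0) \<and> (\<Sum>a\<in>UNIV. P a) = 1"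

definition entropy :: "('a::finite \<Rightarrow> real) \<Rightarrow> real" where
  "entropy P = - (\<Sum>a\<in>UNIV. if P a = 0 then 0 else P a * ln (P a))"

definition out_dist :: "('a::finite \<Rightarrow> real) \<Rightarrow> ('a \<Rightarrow> 'b::finite \<Rightarrow> real) \<Rightarrow> 'b \<Rightarrow> real" where
  "out_dist P V b = (\<Sum>a\<in>UNIV. P a * V a b)"

definition cond_entropy :: "('a::finite \<Rightarrow> real) \<Rightarrow> ('a \<Rightarrow> 'b::finite \<Rightarrow> real) \<Rightarrow> real" where
  "cond_entropy P V = - (\<Sum>a\<in>UNIV. \<Sum>b\<in>UNIV.
      if P a * V a b = 0 then 0 else P a * V a b * ln (P a * V a b / out_dist P V b))"

definition d_TV :: "('b::finite \<Rightarrow> real) \<Rightarrow> ('b \<Rightarrow> real) \<Rightarrow> real" where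
  "d_TV p q = (\<Sum>b\<in>UNIV. \<bar>p b - q b\<bar>) / 2"

definition seq_type :: "'b list \<Rightarrow> 'b \<Rightarrow> real" where
  "seq_type ys b = real (count_list ys b) / real (length ys)"

definition typeclass_set :: "('a \<Rightarrow> real) \<Rightarrow> nat \<Rightarrow> 'a list set" where
  "typeclass_set P c = {xs. length xs = c \<and> (\<forall>a. real (count_list xs a) = real c * P a)}"

definition chunk :: "nat \<Rightarrow> nat \<Rightarrow> 'a list \<Rightarrow> 'a list" where
  "chunk c m xs = take c (drop (m * c) xs)"

definition concat_type_class :: "('a \<Rightarrow> real) \<Rightarrow> nat \<Rightarrow> nat \<Rightarrow> 'a list set" where
  "concat_type_class P c M =
     {xs. length xs = M * c \<and> (\<forall>m<M. chunk c m xs \<in> typeclass_set P c)}"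

definition avg_channel :: "('s \<Rightarrow> 'a \<Rightarrow> 'b \<Rightarrow> real) \<Rightarrow> 'a list \<Rightarrow> 's list \<Rightarrow> 'a \<Rightarrow> 'b \<Rightarrow> real" where
  "avg_channel W xs ss a b =
     (\<Sum>t<length xs. if xs ! t = a then W (ss ! t) a b else 0) / real (count_list xs a)"

definition near_channels ::
  "('a::finite \<Rightarrow> real) \<Rightarrow> ('a \<Rightarrow> 'b::finite \<Rightarrow> real) set \<Rightarrow> 'b list \<Rightarrow> real \<Rightarrow> ('a \<Rightarrow> 'b \<Rightarrow> real) set" where
  "near_channels P Vs ys \<delta> = {V \<in> Vs. d_TV (seq_type ys) (out_dist P V) < \<delta>}"

definition out_prob ::
  "('s \<Rightarrow> 'a \<Rightarrow> 'b::finite \<Rightarrow> real) \<Rightarrow> 'a list \<Rightarrow> 's list \<Rightarrow> ('b list \<Rightarrow> bool) \<Rightarrow> real" where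
  "out_prob W xs ss A =
     (\<Sum>ys\<in>{ys. length ys = length xs}.
        if A ys then (\<Prod>t<length xs. W (ss ! t) (xs ! t) (ys ! t)) else 0)"

end

theory Submission
  imports Defs "HOL-Combinatorics.Multiset_Permutations" "HOL-Analysis.Analysis" "HOL-Real_Asymp.Real_Asymp"
begin


lemma finite_len: "finite {ys::'b::finite list. length ys = n}"
  using finite_lists_length_eq[of "UNIV::'b set" n] by simp

lemma lists_Suc: "{ys::'b list. length ys = Suc n} = (\<lambda>(b,zs). b#zs) ` (UNIV \<times> {ys. length ys = n})"
  by (auto simp: length_Suc_conv image_iff)

lemma sum_lists_prod:
  fixes f :: "nat \<Rightarrow> 'b::finite \<Rightarrow> real"
  shows "(\<Sum>ys\<in>{ys. length ys = n}. \<Prod>t<n. f t (ys!t)) = (\<Prod>t<n. \<Sum>b\<in>UNIV. f t b)"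
proof (induction n arbitrary: f)
  case 0
  have "{ys::'b list. length ys = 0} = {[]}" by auto
  then show ?case by simp
next
  case (Suc n)
  have inj: "inj_on (\<lambda>(b,zs). b#zs) (UNIV \<times> {ys::'b list. length ys = n})"
    by (auto simp: inj_on_def)
  have "(\<Sum>ys\<in>{ys. length ys = Suc n}. \<Prod>t<Suc n. f t (ys!t))
      = (\<Sum>(b,zs)\<in>UNIV \<times> {ys::'b list. length ys = n}. \<Prod>t<Suc n. f t ((b#zs)!t))"
    unfolding lists_Suc by (subst sum.reindex[OF inj]) (simp add: case_prod_unfold)
  also have "\<dots> = (\<Sum>(b,zs)\<in>UNIV \<times> {ys::'b list. length ys = n}. f 0 b * (\<Prod>t<n. f (Suc t) (zs!t)))"
    by (intro sum.cong refl) (auto simp del: prod.lessThan_Suc simp: prod.lessThan_Suc_shift)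
  also have "\<dots> = (\<Sum>b\<in>UNIV. f 0 b) * (\<Sum>zs\<in>{ys::'b list. length ys = n}. \<Prod>t<n. f (Suc t) (zs!t))"
    by (simp add: sum_product sum.cartesian_product)
  also have "\<dots> = (\<Sum>b\<in>UNIV. f 0 b) * (\<Prod>t<n. \<Sum>b\<in>UNIV. f (Suc t) b)"
    using Suc.IH[of "\<lambda>t. f (Suc t)"] by simp
  also have "\<dots> = (\<Prod>t<Suc n. \<Sum>b\<in>UNIV. f t b)"
    by (simp only: prod.lessThan_Suc_shift)
  finally show ?case .
qed

lemma exp_le_quad:
  fixes u :: real assumes "\<bar>u\<bar> \<le> 1" shows "exp u \<le> 1 + u + u^2"
proof (cases "u \<ge> 0")
  case True then show ?thesis using exp_bound[of u] assms by auto
next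
  case False
  define w where "w = -u"
  have w: "0 < w" "w \<le> 1" using False assms by (auto simp: w_def)
  have pos: "1 - w + w^2 > 0" using w by (simp add: power2_eq_square) (smt (verit) mult_pos_pos)
  have "1 \<le> 1 + w^3" using w by simp
  also have "\<dots> = (1+w) * (1 - w + w^2)" by (simp add: algebra_simps power2_eq_square power3_eq_cube)
  also have "\<dots> \<le> exp w * (1 - w + w^2)"
    using pos exp_ge_add_one_self[of w] by (intro mult_right_mono) auto
  finally have "exp (-w) \<le> 1 - w + w^2"
    by (simp add: exp_minus field_simps)
  then show ?thesis by (simp add: w_def)
qed

lemma chernoff:
  fixes p g :: "nat \<Rightarrow> 'b::finite \<Rightarrow> real" and lam a :: real
  assumes p0: "\<And>t b. p t b \<ge> 0" and p1: "\<And>t. t < n \<Longrightarrow> (\<Sum>b\<in>UNIV. p t b) = 1"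
    and g1: "\<And>t b. \<bar>g t b\<bar> \<le> 1" and gI: "\<And>t b. t \<notin> I \<Longrightarrow> g t b = 0"
    and l: "0 \<le> lam" "lam \<le> 1/2"
  shows "(\<Sum>ys\<in>{ys. length ys = n}.
      if (\<Sum>t<n. g t (ys!t) - (\<Sum>b\<in>UNIV. p t b * g t b)) \<ge> a then \<Prod>t<n. p t (ys!t) else 0)
     \<le> exp (4 * lam^2 * card (I \<inter> {..<n}) - lam * a)"
proof -
  define mu where "mu t = (\<Sum>b\<in>UNIV. p t b * g t b)" for t
  have mu1: "\<bar>mu t\<bar> \<le> 1" if "t < n" for t
  proof -
    have "\<bar>mu t\<bar> \<le> (\<Sum>b\<in>UNIV. \<bar>p t b * g t b\<bar>)" unfolding mu_def by (rule sum_abs)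
    also have "\<dots> \<le> (\<Sum>b\<in>UNIV. p t b)"
      by (intro sum_mono) (use p0 g1 in \<open>auto simp: abs_mult intro: mult_left_le\<close>)
    finally show ?thesis using p1[OF that] by simp
  qed
  have step1: "(if (\<Sum>t<n. g t (ys!t) - mu t) \<ge> a then \<Prod>t<n. p t (ys!t) else 0)
      \<le> (\<Prod>t<n. p t (ys!t) * exp (lam * (g t (ys!t) - mu t))) * exp (- lam * a)" for ys
  proof -
    have eq: "(\<Prod>t<n. p t (ys!t) * exp (lam * (g t (ys!t) - mu t))) * exp (- lam * a)
        = (\<Prod>t<n. p t (ys!t)) * exp (lam * ((\<Sum>t<n. g t (ys!t) - mu t) - a))"
    proof -
      have "(\<Prod>t<n. p t (ys!t) * exp (lam * (g t (ys!t) - mu t)))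
          = (\<Prod>t<n. p t (ys!t)) * exp (\<Sum>t<n. lam * (g t (ys!t) - mu t))"
        by (simp add: prod.distrib exp_sum)
      also have "(\<Sum>t<n. lam * (g t (ys!t) - mu t)) = lam * (\<Sum>t<n. g t (ys!t) - mu t)"
        by (simp add: sum_distrib_left)
      finally show ?thesis by (simp add: mult.assoc mult_exp_exp right_diff_distrib)
    qed
    have pp: "(\<Prod>t<n. p t (ys!t)) \<ge> 0" using p0 by (simp add: prod_nonneg)
    show ?thesis
    proof (cases "(\<Sum>t<n. g t (ys!t) - mu t) \<ge> a")
      case True
      then have "1 \<le> exp (lam * ((\<Sum>t<n. g t (ys!t) - mu t) - a))" using l by simp
      then show ?thesis unfolding eq using True pp by (simp add: mult_le_cancel_left1)
    next
      case False then show ?thesis unfolding eq using pp by simp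
    qed
  qed
  have "(\<Sum>ys\<in>{ys. length ys = n}.
      if (\<Sum>t<n. g t (ys!t) - mu t) \<ge> a then \<Prod>t<n. p t (ys!t) else 0)
      \<le> (\<Sum>ys\<in>{ys. length ys = n}. (\<Prod>t<n. p t (ys!t) * exp (lam * (g t (ys!t) - mu t)))) * exp (- lam * a)"
    unfolding sum_distrib_right by (intro sum_mono step1)
  also have "(\<Sum>ys\<in>{ys. length ys = n}. (\<Prod>t<n. p t (ys!t) * exp (lam * (g t (ys!t) - mu t))))
      = (\<Prod>t<n. \<Sum>b\<in>UNIV. p t b * exp (lam * (g t b - mu t)))"
    by (rule sum_lists_prod[where f = "\<lambda>t b. p t b * exp (lam * (g t b - mu t))"])
  also have "\<dots> \<le> (\<Prod>t<n. if t \<in> I then exp (4 * lam^2) else 1)"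
  proof (intro prod_mono conjI)
    fix t assume t: "t \<in> {..<n}"
    show "0 \<le> (\<Sum>b\<in>UNIV. p t b * exp (lam * (g t b - mu t)))" using p0 by (intro sum_nonneg) simp
    show "(\<Sum>b\<in>UNIV. p t b * exp (lam * (g t b - mu t))) \<le> (if t \<in> I then exp (4 * lam^2) else 1)"
    proof (cases "t \<in> I")
      case False
      then have "mu t = 0" using gI by (simp add: mu_def)
      then show ?thesis using False gI p1 t by simp
    next
      case True
      have b: "p t b * exp (lam * (g t b - mu t)) \<le> p t b * (1 + lam * (g t b - mu t) + 4 * lam^2)" for b
      proof -
        have d: "\<bar>g t b - mu t\<bar> \<le> 2" using g1[of t b] mu1[of t] t by auto
        have u: "\<bar>lam * (g t b - mu t)\<bar> \<le> 1"
          using mult_left_mono[OF d l(1)] l by (simp add: abs_mult)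
        have u2: "\<bar>lam * (g t b - mu t)\<bar> \<le> lam * 2"
          using mult_left_mono[OF d l(1)] l by (simp add: abs_mult)
        have "(lam * (g t b - mu t))^2 = \<bar>lam * (g t b - mu t)\<bar>^2" by simp
        also have "\<dots> \<le> (lam * 2)^2" by (intro power_mono u2) simp
        finally have "(lam * (g t b - mu t))^2 \<le> (lam * 2)^2" .
        then have "exp (lam * (g t b - mu t)) \<le> 1 + lam * (g t b - mu t) + 4 * lam^2"
          using exp_le_quad[OF u] by (simp add: power_mult_distrib)
        then show ?thesis using p0 by (intro mult_left_mono) auto
      qed
      have "(\<Sum>b\<in>UNIV. p t b * exp (lam * (g t b - mu t)))
          \<le> (\<Sum>b\<in>UNIV. p t b * (1 + lam * (g t b - mu t) + 4 * lam^2))" by (intro sum_mono b)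
      also have "\<dots> = (\<Sum>b\<in>UNIV. p t b) * (1 + 4*lam^2) + lam * (\<Sum>b\<in>UNIV. p t b * g t b) - lam * mu t * (\<Sum>b\<in>UNIV. p t b)"
        by (simp add: algebra_simps sum.distrib sum_distrib_left sum_subtractf sum_distrib_right)
      also have "\<dots> = 1 + 4 * lam^2" using p1[OF t[simplified]] by (simp add: mu_def)
      also have "\<dots> \<le> exp (4 * lam^2)" by (rule exp_ge_add_one_self)
      finally show ?thesis using True by simp
    qed
  qed
  also have "(\<Prod>t<n. if t \<in> I then exp (4 * lam^2) else 1) = exp (4 * lam^2) ^ card (I \<inter> {..<n})"
    by (simp add: prod.If_cases Int_commute)
  also have "\<dots> = exp (4 * lam^2 * card (I \<inter> {..<n}))"
    by (simp add: exp_of_nat_mult[symmetric] mult.commute)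
  finally show ?thesis unfolding mu_def
    by (simp add: mult_exp_exp algebra_simps)
qed


lemma chunk_length: "m < M \<Longrightarrow> length xs = M * c \<Longrightarrow> length (chunk c m xs) = c"
proof -
  assume "m < M" "length xs = M * c"
  then have "m * c + c \<le> M * c" by (metis add.commute mult_Suc less_eq_Suc_le mult_le_mono1)
  then show ?thesis using \<open>length xs = M * c\<close> by (simp add: chunk_def)
qed

lemma chunk_nth: "m < M \<Longrightarrow> length xs = M * c \<Longrightarrow> i < c \<Longrightarrow> chunk c m xs ! i = xs ! (m * c + i)"
  by (simp add: chunk_def)

lemma chunk_append: "length u = M * c \<Longrightarrow> m < M \<Longrightarrow> chunk c m (u @ w) = chunk c m u"
proof -
  assume a: "length u = M * c" "m < M"
  then have "m * c + c \<le> M * c" by (metis add.commute mult_Suc less_eq_Suc_le mult_le_mono1)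
  then show ?thesis using a by (simp add: chunk_def)
qed

lemma chunk_append_last: "length u = M * c \<Longrightarrow> length w = c \<Longrightarrow> chunk c M (u @ w) = w"
  by (simp add: chunk_def)

lemma card_chunks:
  assumes "\<And>m. m < M \<Longrightarrow> S m \<subseteq> {xs. length xs = c}"
  shows "card {xs. length xs = M * c \<and> (\<forall>m<M. chunk c m xs \<in> S m)} = (\<Prod>m<M. card (S m))"
  using assms
proof (induction M)
  case 0
  have "{xs. length xs = 0 * c \<and> (\<forall>m<0. chunk c m xs \<in> S m)} = {[]}" by auto
  then show ?case by simp
next
  case (Suc M)
  let ?A = "{xs. length xs = M * c \<and> (\<forall>m<M. chunk c m xs \<in> S m)}"
  have eq: "{xs. length xs = Suc M * c \<and> (\<forall>m<Suc M. chunk c m xs \<in> S m)} = (\<lambda>(u,w). u @ w) ` (?A \<times> S M)"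
  proof (intro set_eqI iffI)
    fix xs assume xs: "xs \<in> {xs. length xs = Suc M * c \<and> (\<forall>m<Suc M. chunk c m xs \<in> S m)}"
    let ?u = "take (M*c) xs" and ?w = "drop (M*c) xs"
    have lu: "length ?u = M * c" using xs by auto
    have m1: "?u \<in> ?A"
    proof -
      have "chunk c m ?u \<in> S m" if "m < M" for m
      proof -
        have "chunk c m xs \<in> S m" using xs that by auto
        then show ?thesis using chunk_append[OF lu that, of ?w] by simp
      qed
      then show ?thesis using lu by auto
    qed
    have m2: "?w \<in> S M"
    proof -
      have lw: "length ?w = c" using xs by auto
      have "chunk c M xs \<in> S M" using xs by auto
      then show ?thesis using chunk_append_last[OF lu lw] by simp
    qed
    have mem: "(?u,?w) \<in> ?A \<times> S M" using m1 m2 by (rule SigmaI)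
    have "xs = (\<lambda>(u,w). u @ w) (?u,?w)" by simp
    then show "xs \<in> (\<lambda>(u,w). u @ w) ` (?A \<times> S M)" using mem by (rule image_eqI)
  next
    fix xs assume "xs \<in> (\<lambda>(u,w). u @ w) ` (?A \<times> S M)"
    then obtain u w where uw: "xs = u @ w" "u \<in> ?A" "w \<in> S M" by auto
    have lu: "length u = M * c" using uw by auto
    have lw: "length w = c" using uw Suc.prems[of M] by auto
    have "chunk c m xs \<in> S m" if "m < Suc M" for m
    proof (cases "m < M")
      case True then show ?thesis using uw chunk_append[OF lu True, of w] by auto
    next
      case False then have "m = M" using that by simp
      then show ?thesis using uw chunk_append_last[OF lu lw] by simp
    qed
    then show "xs \<in> {xs. length xs = Suc M * c \<and> (\<forall>m<Suc M. chunk c m xs \<in> S m)}"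
      using lu lw uw by simp
  qed
  have inj: "inj_on (\<lambda>(u,w). u @ w) (?A \<times> S M)"
    by (auto simp: inj_on_def)
  have "card (?A \<times> S M) = card ?A * card (S M)" by (rule card_cartesian_product)
  then show ?case unfolding eq card_image[OF inj] using Suc by simp
qed


lemma fact_lower: "real n ^ n \<le> fact n * exp (real n)"
proof (induction n)
  case 0 then show ?case by simp
next
  case (Suc n)
  show ?case
  proof (cases "n = 0")
    case True then show ?thesis by (simp add: exp_ge_add_one_self[of 1, simplified] )
  next
    case False
    have npos: "real n > 0" using False by simp
    have b: "(1 + 1 / real n) ^ n \<le> exp 1"
      using exp_ge_one_plus_x_over_n_power_n[where x=1 and n=n] False by simp
    have "(1 + 1 / real n) ^ n = (real n + 1) ^ n / real n ^ n"
      using False by (simp add: field_simps power_divide)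
    then have "(real n + 1) ^ n \<le> exp 1 * real n ^ n" using b npos
      by (simp add: divide_le_eq)
    then have "(real n + 1) * (real n + 1) ^ n \<le> (real n + 1) * (exp 1 * real n ^ n)"
      by (intro mult_left_mono) auto
    then have "real (Suc n) ^ Suc n \<le> (real n + 1) * (exp 1 * real n ^ n)"
      by (simp add: add.commute)
    also have "\<dots> \<le> (real n + 1) * (exp 1 * (fact n * exp (real n)))"
      using Suc.IH by (intro mult_left_mono) auto
    also have "\<dots> = fact (Suc n) * exp (real (Suc n))"
      by (simp add: exp_add algebra_simps)
    finally show ?thesis .
  qed
qed

lemma ln_one_plus_inv: "n > 0 \<Longrightarrow> 1 / (real n + 1) \<le> ln (1 + 1 / real n)"
proof -
  assume n: "n > 0"
  have "ln (1 - 1/(real n + 1)) \<le> - (1/(real n + 1))"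
    using n by (intro ln_one_minus_pos_upper_bound) (auto simp: field_simps)
  moreover have "1 - 1/(real n + 1) = inverse (1 + 1 / real n)"
    using n by (simp add: field_simps)
  moreover have "ln (inverse (1 + 1 / real n)) = - ln (1 + 1 / real n)"
    using n by (subst ln_inverse) (auto simp: add_pos_pos)
  ultimately show ?thesis by simp
qed

lemma fact_upper: "n \<ge> 1 \<Longrightarrow> fact n * exp (real n) \<le> exp 1 * real n * real n ^ n"
proof (induction n rule: dec_induct)
  case base then show ?case by simp
next
  case (step n)
  have n: "n > 0" using step by simp
  have "1 \<le> (real n + 1) * ln (1 + 1 / real n)"
    using ln_one_plus_inv[OF n] by (simp add: field_simps)
  then have "exp 1 \<le> exp ((real n + 1) * ln (1 + 1 / real n))" by simp
  also have "\<dots> = (1 + 1 / real n) ^ (n+1)"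
  proof -
    have y: "1 + 1 / real n > 0" using n by (simp add: add_pos_pos)
    have "(1 + 1 / real n) ^ (n+1) = exp (ln (1 + 1 / real n)) ^ (n+1)" using y by simp
    also have "\<dots> = exp (real (n+1) * ln (1 + 1 / real n))" by (rule exp_of_nat_mult[symmetric])
    finally show ?thesis by simp
  qed
  also have "\<dots> = (real n + 1) ^ (n+1) / real n ^ (n+1)"
    using n by (simp add: field_simps power_divide)
  finally have e: "exp 1 * real n ^ (n+1) \<le> (real n + 1) ^ (n+1)"
    using n by (simp add: le_divide_eq)
  have "fact (Suc n) * exp (real (Suc n)) = (real n + 1) * exp 1 * (fact n * exp (real n))"
    by (simp add: exp_add algebra_simps)
  also have "\<dots> \<le> (real n + 1) * exp 1 * (exp 1 * real n * real n ^ n)"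
    using step.IH by (intro mult_left_mono) auto
  also have "\<dots> = (real n + 1) * exp 1 * (exp 1 * real n ^ (n+1))" by simp
  also have "\<dots> \<le> (real n + 1) * exp 1 * (real n + 1) ^ (n+1)"
    using e by (intro mult_left_mono) auto
  also have "\<dots> = exp 1 * real (Suc n) * real (Suc n) ^ Suc n" by (simp add: add.commute)
  finally show ?case .
qed

lemma ln_fact_lower: "n \<ge> 1 \<Longrightarrow> real n * ln (real n) - real n \<le> ln (fact n)"
proof -
  assume n: "n \<ge> 1"
  have "ln (real n ^ n) \<le> ln (fact n * exp (real n))"
    using fact_lower[of n] n by (subst ln_le_cancel_iff) auto
  then show ?thesis using n by (simp add: ln_mult ln_realpow)
qed

lemma ln_fact_upper: "n \<ge> 1 \<Longrightarrow> ln (fact n) \<le> 1 + ln (real n) + real n * ln (real n) - real n"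
proof -
  assume n: "n \<ge> 1"
  have "ln (fact n * exp (real n)) \<le> ln (exp 1 * real n * real n ^ n)"
    using fact_upper[OF n] n by (subst ln_le_cancel_iff) auto
  then show ?thesis using n by (simp add: ln_mult ln_realpow)
qed

lemma typeclass_card:
  fixes P :: "'a::finite \<Rightarrow> real"
  assumes pd: "is_pd P" and pos: "\<forall>a. P a > 0" and c: "c \<ge> 1"
    and int: "\<forall>a. \<exists>k::nat. real c * P a = real k"
  shows "exp (real c * entropy P - real CARD('a) * (1 + ln (real c))) \<le> real (card (typeclass_set P c))"
proof -
  define K where "K a = (SOME k::nat. real c * P a = real k)" for a
  have K: "real (K a) = real c * P a" for a
    unfolding K_def using someI_ex[OF int[rule_format, of a]] by simp
  have Kpos: "K a \<ge> 1" for a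
  proof -
    have "real c * P a > 0" using c pos by simp
    then show ?thesis using K[of a] by simp
  qed
  have sumK: "(\<Sum>a\<in>UNIV. real (K a)) = real c"
    using pd by (simp add: K is_pd_def sum_distrib_left[symmetric])
  have sumK': "(\<Sum>a\<in>UNIV. K a) = c"
    using sumK by (metis of_nat_eq_iff of_nat_sum)
  define Mu where "Mu = (\<Sum>a\<in>UNIV. replicate_mset (K a) a)"
  have cnt: "count Mu a = K a" for a
    unfolding Mu_def by (simp add: count_sum)
  have size: "size Mu = c"
    unfolding Mu_def by (simp add: sumK')
  have setM: "set_mset Mu = UNIV"
  proof -
    have "x \<in># Mu" for x using Kpos[of x] cnt[of x] by (simp add: count_greater_zero_iff[symmetric])
    then show ?thesis by auto
  qed
  have tc: "typeclass_set P c = permutations_of_multiset Mu"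
  proof (intro set_eqI iffI)
    fix xs assume "xs \<in> typeclass_set P c"
    then have "count_list xs a = K a" for a unfolding typeclass_set_def
      using K by (metis (mono_tags, lifting) mem_Collect_eq of_nat_eq_iff)
    then show "xs \<in> permutations_of_multiset Mu"
      by (auto simp: permutations_of_multiset_def multiset_eq_iff count_mset cnt)
  next
    fix xs assume "xs \<in> permutations_of_multiset Mu"
    then have m: "mset xs = Mu" by (simp add: permutations_of_multiset_def)
    then have "length xs = c" using size by (metis size_mset)
    moreover have "real (count_list xs a) = real c * P a" for a
      using m cnt K by (metis count_mset)
    ultimately show "xs \<in> typeclass_set P c" by (simp add: typeclass_set_def)
  qed
  have aux: "real (card (typeclass_set P c)) * (\<Prod>a\<in>UNIV. fact (K a)) = fact c"
    using card_permutations_of_multiset_aux[of Mu] unfolding tc setM cnt size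
    by (metis (mono_tags, lifting) of_nat_fact of_nat_mult of_nat_prod prod.cong)
  have pf: "(\<Prod>a\<in>UNIV. fact (K a) :: real) > 0" by (intro prod_pos) auto
  have cardpos: "real (card (typeclass_set P c)) > 0"
    using aux pf by (metis fact_gt_zero zero_less_mult_pos2)
  have lncard: "ln (real (card (typeclass_set P c))) = ln (fact c) - (\<Sum>a\<in>UNIV. ln (fact (K a)))"
  proof -
    have "ln (fact c) = ln (real (card (typeclass_set P c))) + ln (\<Prod>a\<in>UNIV. fact (K a) :: real)"
    proof -
      have "ln (real (card (typeclass_set P c)) * (\<Prod>a\<in>UNIV. fact (K a))) = ln (real (card (typeclass_set P c))) + ln (\<Prod>a\<in>UNIV. fact (K a) :: real)"
        using cardpos pf by (simp add: ln_mult)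
      then show ?thesis unfolding aux .
    qed
    also have "ln (\<Prod>a\<in>UNIV. fact (K a) :: real) = (\<Sum>a\<in>UNIV. ln (fact (K a)))"
      by (rule ln_prod) auto
    finally show ?thesis by simp
  qed
  have "(\<Sum>a\<in>UNIV. ln (fact (K a))) \<le> (\<Sum>a\<in>UNIV. 1 + ln (real (K a)) + real (K a) * ln (real (K a)) - real (K a))"
    by (intro sum_mono ln_fact_upper Kpos)
  also have "\<dots> \<le> (\<Sum>a\<in>UNIV. 1 + ln (real c) + real (K a) * ln (real (K a)) - real (K a))"
  proof (intro sum_mono)
    fix a
    have "K a \<le> c" using sumK' member_le_sum[of a UNIV K] by simp
    then have "ln (real (K a)) \<le> ln (real c)" using Kpos[of a] by simp
    then show "1 + ln (real (K a)) + real (K a) * ln (real (K a)) - real (K a) \<le> 1 + ln (real c) + real (K a) * ln (real (K a)) - real (K a)" by simp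
  qed
  also have "\<dots> = real CARD('a) * (1 + ln (real c)) + (\<Sum>a\<in>UNIV. real (K a) * ln (real (K a))) - real c"
    by (simp add: sum.distrib sum_subtractf sumK)
  also have "(\<Sum>a\<in>UNIV. real (K a) * ln (real (K a))) = real c * ln (real c) - real c * entropy P"
  proof -
    have "(\<Sum>a\<in>UNIV. real (K a) * ln (real (K a))) = (\<Sum>a\<in>UNIV. real c * P a * (ln (real c) + ln (P a)))"
      using c pos by (intro sum.cong refl) (simp add: K ln_mult)
    also have "\<dots> = real c * ln (real c) * (\<Sum>a\<in>UNIV. P a) + real c * (\<Sum>a\<in>UNIV. P a * ln (P a))"
      by (simp add: algebra_simps sum.distrib sum_distrib_left sum_distrib_right)
    also have "(\<Sum>a\<in>UNIV. P a * ln (P a)) = - entropy P"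
      using pos unfolding entropy_def by (simp add: less_imp_neq[symmetric])
    finally show ?thesis using pd by (simp add: is_pd_def)
  qed
  finally have "ln (real (card (typeclass_set P c))) \<ge> real c * entropy P - real CARD('a) * (1 + ln (real c))"
    unfolding lncard using ln_fact_lower[OF c] by linarith
  then show ?thesis using cardpos by (metis exp_le_cancel_iff exp_ln)
qed


definition jcnt :: "'a list \<Rightarrow> 'b list \<Rightarrow> 'a \<Rightarrow> 'b \<Rightarrow> nat" where
  "jcnt xs ys a b = card {i. i < length ys \<and> xs!i = a \<and> ys!i = b}"

definition ycnt :: "'b list \<Rightarrow> 'b \<Rightarrow> nat" where
  "ycnt ys b = card {i. i < length ys \<and> ys!i = b}"

definition condH :: "('a::finite \<Rightarrow> 'b::finite \<Rightarrow> real) \<Rightarrow> real" where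
  "condH q = - (\<Sum>a\<in>UNIV. \<Sum>b\<in>UNIV. if q a b = 0 then 0 else q a b * ln (q a b / (\<Sum>a'\<in>UNIV. q a' b)))"

definition empH :: "'a::finite list \<Rightarrow> 'b::finite list \<Rightarrow> real" where
  "empH xs ys = condH (\<lambda>a b. real (jcnt xs ys a b) / real (length ys))"

lemma card_as_sum: "real (card {i. i < (n::nat) \<and> Q i}) = (\<Sum>i<n. if Q i then 1 else 0)"
proof -
  have "(\<Sum>i<n. if Q i then 1 else 0) = (\<Sum>i\<in>{i\<in>{..<n}. Q i}. 1::real)"
    by (rule sum.inter_filter[symmetric]) simp
  also have "{i\<in>{..<n}. Q i} = {i. i < n \<and> Q i}" by auto
  finally show ?thesis by simp
qed

lemma jcnt_sum: "real (jcnt xs ys a b) = (\<Sum>i<length ys. if xs!i = a \<and> ys!i = b then 1 else 0)"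
  unfolding jcnt_def by (rule card_as_sum)

lemma ycnt_sum: "real (ycnt ys b) = (\<Sum>i<length ys. if ys!i = b then 1 else 0)"
  unfolding ycnt_def by (rule card_as_sum)

lemma sum_jcnt: "(\<Sum>a\<in>(UNIV::'a::finite set). real (jcnt xs ys a b)) = real (ycnt ys b)"
  unfolding jcnt_sum ycnt_sum
  by (subst sum.swap) (auto intro!: sum.cong simp: sum.delta)

lemma regroup:
  fixes f :: "'a::finite \<Rightarrow> 'b::finite \<Rightarrow> real"
  shows "(\<Sum>i<length ys. f (xs!i) (ys!i)) = (\<Sum>a\<in>UNIV. \<Sum>b\<in>UNIV. real (jcnt xs ys a b) * f a b)"
proof -
  have "(\<Sum>a\<in>UNIV. \<Sum>b\<in>UNIV. real (jcnt xs ys a b) * f a b)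
     = (\<Sum>a\<in>UNIV. \<Sum>b\<in>UNIV. \<Sum>i<length ys. if xs!i = a \<and> ys!i = b then f a b else 0)"
    unfolding jcnt_sum sum_distrib_right by (intro sum.cong refl) simp
  also have "\<dots> = (\<Sum>i<length ys. \<Sum>a\<in>UNIV. \<Sum>b\<in>UNIV. if xs!i = a \<and> ys!i = b then f a b else 0)"
    by (simp add: sum.swap[of _ UNIV "{..<length ys}"] sum.swap[of _ UNIV "UNIV::'b set"])
  also have "\<dots> = (\<Sum>i<length ys. f (xs!i) (ys!i))"
  proof (intro sum.cong refl)
    fix i
    have "(\<Sum>b\<in>UNIV. if xs!i = a \<and> ys!i = b then f a b else 0) = (if xs!i = a then f a (ys!i) else 0)" for a
      by (cases "xs!i = a") (simp_all add: sum.delta sum.delta')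
    then show "(\<Sum>a\<in>UNIV. \<Sum>b\<in>UNIV. if xs!i = a \<and> ys!i = b then f a b else 0) = f (xs!i) (ys!i)"
      by (simp add: sum.delta sum.delta')
  qed
  finally show ?thesis by simp
qed


lemma jcnt_pos: "i < length ys \<Longrightarrow> jcnt xs ys (xs!i) (ys!i) \<ge> 1"
proof -
  assume i: "i < length ys"
  have "i \<in> {j. j < length ys \<and> xs!j = xs!i \<and> ys!j = ys!i}" using i by simp
  moreover have "finite {j. j < length ys \<and> xs!j = xs!i \<and> ys!j = ys!i}" by simp
  ultimately have "card {j. j < length ys \<and> xs!j = xs!i \<and> ys!j = ys!i} > 0"
    by (subst card_gt_0_iff) blast
  then show ?thesis unfolding jcnt_def by linarith
qed

lemma jcnt_le: "jcnt xs ys a b \<le> length ys"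
proof -
  have "jcnt xs ys a b \<le> card {..<length ys}" unfolding jcnt_def by (intro card_mono) auto
  then show ?thesis by simp
qed

lemma empH_alt:
  fixes xs :: "'a::finite list" and ys :: "'b::finite list"
  assumes n: "length ys > 0"
  shows "- real (length ys) * empH xs ys = (\<Sum>a\<in>UNIV. \<Sum>b\<in>UNIV.
     real (jcnt xs ys a b) * ln (real (jcnt xs ys a b) / real (ycnt ys b)))"
proof -
  let ?n = "real (length ys)"
  have "- ?n * empH xs ys = (\<Sum>a\<in>UNIV. \<Sum>b\<in>UNIV. ?n * (if real (jcnt xs ys a b) / ?n = 0 then 0 else
      real (jcnt xs ys a b) / ?n * ln (real (jcnt xs ys a b) / ?n / (\<Sum>a'\<in>UNIV. real (jcnt xs ys a' b) / ?n))))"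
  proof -
    have "- ?n * empH xs ys = ?n * (\<Sum>a\<in>UNIV. \<Sum>b\<in>UNIV. (if real (jcnt xs ys a b) / ?n = 0 then 0 else
      real (jcnt xs ys a b) / ?n * ln (real (jcnt xs ys a b) / ?n / (\<Sum>a'\<in>UNIV. real (jcnt xs ys a' b) / ?n))))"
      unfolding empH_def condH_def by simp
    then show ?thesis by (simp only: sum_distrib_left)
  qed
  also have "\<dots> = (\<Sum>a\<in>UNIV. \<Sum>b\<in>UNIV. real (jcnt xs ys a b) * ln (real (jcnt xs ys a b) / real (ycnt ys b)))"
  proof (intro sum.cong refl)
    fix a b
    have s: "(\<Sum>a'\<in>UNIV. real (jcnt xs ys a' b) / ?n) = real (ycnt ys b) / ?n"
      by (simp add: sum_divide_distrib[symmetric] sum_jcnt)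
    show "?n * (if real (jcnt xs ys a b) / ?n = 0 then 0 else
      real (jcnt xs ys a b) / ?n * ln (real (jcnt xs ys a b) / ?n / (\<Sum>a'\<in>UNIV. real (jcnt xs ys a' b) / ?n)))
      = real (jcnt xs ys a b) * ln (real (jcnt xs ys a b) / real (ycnt ys b))"
      unfolding s using n by auto
  qed
  finally show ?thesis .
qed

lemma fiber_card:
  fixes x0 :: "'a::finite list" and ys :: "'b::finite list"
  assumes n: "length ys = n" "n > 0" and x0: "length x0 = n"
  shows "real (card {xs. length xs = n \<and> (\<forall>a b. jcnt xs ys a b = jcnt x0 ys a b)}) \<le> exp (real n * empH x0 ys)"
proof -
  define K where "K = jcnt x0 ys"
  define T where "T a b = real (K a b) / real (ycnt ys b)" for a b
  define Fib where "Fib = {xs::'a list. length xs = n \<and> (\<forall>a b. jcnt xs ys a b = K a b)}"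
  have T0: "T a b \<ge> 0" for a b by (simp add: T_def)
  have tot: "(\<Sum>xs\<in>{xs. length xs = n}. \<Prod>i<n. T (xs!i) (ys!i)) = 1"
  proof -
    have "(\<Sum>xs\<in>{xs. length xs = n}. \<Prod>i<n. T (xs!i) (ys!i)) = (\<Prod>i<n. \<Sum>a\<in>UNIV. T a (ys!i))"
      by (rule sum_lists_prod[where f = "\<lambda>i a. T a (ys!i)"])
    also have "\<dots> = (\<Prod>i<n. 1)"
    proof (intro prod.cong refl)
      fix i assume i: "i \<in> {..<n}"
      have "ycnt ys (ys!i) \<ge> 1"
      proof -
        have "real (jcnt x0 ys (x0!i) (ys!i)) \<le> real (ycnt ys (ys!i))"
          using sum_jcnt[of x0 ys "ys!i"] member_le_sum[of "x0!i" UNIV "\<lambda>a. real (jcnt x0 ys a (ys!i))"]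
          by simp
        moreover have "jcnt x0 ys (x0!i) (ys!i) \<ge> 1" using jcnt_pos[of i ys x0] i n by simp
        ultimately show ?thesis by linarith
      qed
      then show "(\<Sum>a\<in>UNIV. T a (ys!i)) = 1"
        unfolding T_def K_def by (simp add: sum_divide_distrib[symmetric] sum_jcnt)
    qed
    finally show ?thesis by simp
  qed
  have val: "(\<Prod>i<n. T (xs!i) (ys!i)) = exp (- real n * empH x0 ys)" if xs: "xs \<in> Fib" for xs
  proof -
    have Kx: "jcnt xs ys = K" using xs by (auto simp: Fib_def)
    have pos: "T (xs!i) (ys!i) > 0" if i: "i < n" for i
    proof -
      have k: "K (xs!i) (ys!i) \<ge> 1" using jcnt_pos[of i ys xs] i n Kx by simp
      have "real (K (xs!i) (ys!i)) \<le> real (ycnt ys (ys!i))"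
        using sum_jcnt[of xs ys "ys!i"] member_le_sum[of "xs!i" UNIV "\<lambda>a. real (jcnt xs ys a (ys!i))"] Kx
        by simp
      then show ?thesis using k by (simp add: T_def)
    qed
    have "(\<Prod>i<n. T (xs!i) (ys!i)) = exp (\<Sum>i<n. ln (T (xs!i) (ys!i)))"
      using pos by (simp add: exp_sum)
    also have "(\<Sum>i<n. ln (T (xs!i) (ys!i))) = (\<Sum>a\<in>UNIV. \<Sum>b\<in>UNIV. real (jcnt xs ys a b) * ln (T a b))"
      using regroup[of "\<lambda>a b. ln (T a b)" xs ys] n by simp
    also have "\<dots> = - real n * empH x0 ys"
      using empH_alt[of ys x0] n unfolding Kx T_def K_def by simp
    finally show ?thesis .
  qed
  have fin: "finite {xs::'a list. length xs = n}" by (rule finite_len)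
  have sub: "Fib \<subseteq> {xs. length xs = n}" by (auto simp: Fib_def)
  have "real (card Fib) * exp (- real n * empH x0 ys) = (\<Sum>xs\<in>Fib. \<Prod>i<n. T (xs!i) (ys!i))"
    using val by simp
  also have "\<dots> \<le> (\<Sum>xs\<in>{xs. length xs = n}. \<Prod>i<n. T (xs!i) (ys!i))"
    by (intro sum_mono2 fin sub) (simp add: T0 prod_nonneg)
  also have "\<dots> = 1" by (rule tot)
  finally have "real (card Fib) * exp (- real n * empH x0 ys) \<le> 1" .
  then have "real (card Fib) \<le> exp (real n * empH x0 ys)"
    by (simp add: exp_minus field_simps)
  then show ?thesis unfolding Fib_def K_def .
qed


lemma card_Ks: "card {K::'a::finite \<Rightarrow> 'b::finite \<Rightarrow> nat. \<forall>a b. K a b \<le> n} = Suc n ^ (CARD('a) * CARD('b))"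
proof -
  have "{K::'a \<Rightarrow> 'b \<Rightarrow> nat. \<forall>a b. K a b \<le> n} = Pi\<^sub>E UNIV (\<lambda>_. Pi\<^sub>E UNIV (\<lambda>_. {..n}))"
    by (auto simp: PiE_UNIV_domain)
  then show ?thesis by (simp add: card_PiE flip: power_mult) (simp add: ac_simps)
qed

lemma count_low:
  fixes ys :: "'b::finite list"
  assumes n: "length ys = n" "n > 0"
  shows "real (card {xs::'a::finite list. length xs = n \<and> empH xs ys \<le> h})
    \<le> real (Suc n) ^ (CARD('a) * CARD('b)) * exp (real n * h)"
proof -
  define S where "S = {xs::'a list. length xs = n \<and> empH xs ys \<le> h}"
  define J where "J xs = jcnt xs ys" for xs :: "'a list"
  define Ks where "Ks = {K::'a \<Rightarrow> 'b \<Rightarrow> nat. \<forall>a b. K a b \<le> n}"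
  have finS: "finite S" using finite_len[of n] by (rule rev_finite_subset) (auto simp: S_def)
  have JS: "J ` S \<subseteq> Ks" using jcnt_le n by (auto simp: J_def Ks_def)
  have finKs: "finite Ks"
  proof -
    have "Ks = Pi\<^sub>E UNIV (\<lambda>_. Pi\<^sub>E UNIV (\<lambda>_. {..n}))" by (auto simp: Ks_def PiE_UNIV_domain)
    then show ?thesis by (simp add: finite_PiE)
  qed
  have eqS: "S = (\<Union>K\<in>J ` S. {xs\<in>S. J xs = K})" by auto
  have "card S \<le> (\<Sum>K\<in>J ` S. card {xs\<in>S. J xs = K})"
  proof -
    have "card (\<Union>K\<in>J ` S. {xs\<in>S. J xs = K}) \<le> (\<Sum>K\<in>J ` S. card {xs\<in>S. J xs = K})"
      by (rule card_UN_le) (rule finite_imageI[OF finS])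
    then show ?thesis using eqS by simp
  qed
  then have "real (card S) \<le> (\<Sum>K\<in>J ` S. real (card {xs\<in>S. J xs = K}))"
    by (simp add: of_nat_sum[symmetric] del: of_nat_sum)
  also have "\<dots> \<le> (\<Sum>K\<in>J ` S. exp (real n * h))"
  proof (intro sum_mono)
    fix K assume "K \<in> J ` S"
    then obtain x0 where x0: "x0 \<in> S" "J x0 = K" by auto
    have "{xs\<in>S. J xs = K} \<subseteq> {xs. length xs = n \<and> (\<forall>a b. jcnt xs ys a b = jcnt x0 ys a b)}"
      using x0 by (auto simp: S_def J_def)
    moreover have "finite {xs::'a list. length xs = n \<and> (\<forall>a b. jcnt xs ys a b = jcnt x0 ys a b)}"
      using finite_len[of n] by (rule rev_finite_subset) auto
    ultimately have "card {xs\<in>S. J xs = K} \<le> card {xs. length xs = n \<and> (\<forall>a b. jcnt xs ys a b = jcnt x0 ys a b)}"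
      by (rule card_mono[rotated])
    then have "real (card {xs\<in>S. J xs = K}) \<le> real (card {xs. length xs = n \<and> (\<forall>a b. jcnt xs ys a b = jcnt x0 ys a b)})"
      by simp
    also have "\<dots> \<le> exp (real n * empH x0 ys)"
      using fiber_card[OF n] x0 by (auto simp: S_def)
    also have "\<dots> \<le> exp (real n * h)"
      using x0 by (auto simp: S_def intro!: mult_left_mono)
    finally show "real (card {xs\<in>S. J xs = K}) \<le> exp (real n * h)" .
  qed
  also have "\<dots> = real (card (J ` S)) * exp (real n * h)" by simp
  also have "\<dots> \<le> real (card Ks) * exp (real n * h)"
    using card_mono[OF finKs JS] by (intro mult_right_mono) auto
  also have "card Ks = Suc n ^ (CARD('a) * CARD('b))" unfolding Ks_def by (rule card_Ks)
  finally show ?thesis unfolding S_def by simp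
qed


lemma xlnx_cont: "continuous_on {0..1::real} (\<lambda>x. x * ln x)"
proof (subst continuous_on_eq_continuous_within, intro ballI)
  fix x :: real assume x: "x \<in> {0..1}"
  show "continuous (at x within {0..1}) (\<lambda>x. x * ln x)"
  proof (cases "x = 0")
    case True
    have "((\<lambda>x::real. x * ln x) \<longlongrightarrow> 0) (at_right 0)" by real_asymp
    then show ?thesis using True by (simp add: continuous_within at_within_Icc_at_right)
  next
    case False
    then have "isCont (\<lambda>x. x * ln x) x" by (intro continuous_intros) auto
    then show ?thesis by (rule continuous_at_imp_continuous_within)
  qed
qed

lemma xlnx_ucont:
  assumes "e > 0"
  shows "\<exists>d>0. \<forall>x\<in>{0..1::real}. \<forall>y\<in>{0..1}. \<bar>x - y\<bar> < d \<longrightarrow> \<bar>x * ln x - y * ln y\<bar> < e"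
proof -
  have "uniformly_continuous_on {0..1::real} (\<lambda>x. x * ln x)"
    by (rule compact_uniformly_continuous[OF xlnx_cont]) simp
  then obtain d where d: "d > 0" "\<forall>x\<in>{0..1::real}. \<forall>x'\<in>{0..1}. dist x' x < d \<longrightarrow> dist (x' * ln x') (x * ln x) < e"
    unfolding uniformly_continuous_on_def using assms by metis
  show ?thesis using d by (intro exI[of _ d]) (auto simp: dist_real_def)
qed

lemma condH_alt:
  fixes q :: "'a::finite \<Rightarrow> 'b::finite \<Rightarrow> real"
  assumes q0: "\<And>a b. q a b \<ge> 0"
  shows "condH q = - (\<Sum>a\<in>UNIV. \<Sum>b\<in>UNIV. q a b * ln (q a b)) + (\<Sum>b\<in>UNIV. (\<Sum>a\<in>UNIV. q a b) * ln (\<Sum>a\<in>UNIV. q a b))"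
proof -
  have col: "(\<Sum>a\<in>UNIV. if q a b = 0 then 0 else q a b * ln (q a b / (\<Sum>a'\<in>UNIV. q a' b)))
     = (\<Sum>a\<in>UNIV. q a b * ln (q a b)) - (\<Sum>a\<in>UNIV. q a b) * ln (\<Sum>a\<in>UNIV. q a b)" for b
  proof -
    let ?r = "\<Sum>a'\<in>UNIV. q a' b"
    have "(\<Sum>a\<in>UNIV. if q a b = 0 then 0 else q a b * ln (q a b / ?r))
        = (\<Sum>a\<in>UNIV. q a b * ln (q a b) - q a b * ln ?r)"
    proof (intro sum.cong refl)
      fix a
      show "(if q a b = 0 then 0 else q a b * ln (q a b / ?r)) = q a b * ln (q a b) - q a b * ln ?r"
      proof (cases "q a b = 0")
        case False
        then have qp: "q a b > 0" using q0[of a b] by simp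
        have "q a b \<le> ?r" using member_le_sum[of a UNIV "\<lambda>a. q a b"] q0 by simp
        then have "?r > 0" using qp by simp
        then show ?thesis using qp False by (simp add: ln_div algebra_simps)
      qed simp
    qed
    also have "\<dots> = (\<Sum>a\<in>UNIV. q a b * ln (q a b)) - ?r * ln ?r"
      by (simp add: sum_subtractf sum_distrib_right)
    finally show ?thesis .
  qed
  have sw: "(\<Sum>a\<in>UNIV. \<Sum>b\<in>UNIV. if q a b = 0 then 0 else q a b * ln (q a b / (\<Sum>a'\<in>UNIV. q a' b)))
    = (\<Sum>b\<in>UNIV. \<Sum>a\<in>UNIV. if q a b = 0 then 0 else q a b * ln (q a b / (\<Sum>a'\<in>UNIV. q a' b)))"
    by (rule sum.swap)
  have sw2: "(\<Sum>a\<in>UNIV. \<Sum>b\<in>UNIV. q a b * ln (q a b)) = (\<Sum>b\<in>UNIV. \<Sum>a\<in>UNIV. q a b * ln (q a b))"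
    by (rule sum.swap)
  show ?thesis unfolding condH_def sw col sw2
    by (simp add: sum_subtractf)
qed
lemma condH_cont:
  assumes xi: "xi > 0"
  shows "\<exists>eps>0. \<forall>q q0 :: 'a::finite \<Rightarrow> 'b::finite \<Rightarrow> real.
     (\<forall>a b. q a b \<ge> 0 \<and> q0 a b \<ge> 0) \<and> (\<forall>b. (\<Sum>a\<in>UNIV. q a b) \<le> 1 \<and> (\<Sum>a\<in>UNIV. q0 a b) \<le> 1)
     \<and> (\<forall>a b. \<bar>q a b - q0 a b\<bar> < eps) \<longrightarrow> condH q \<le> condH q0 + xi"
proof -
  define NA where "NA = real CARD('a)"
  define NB where "NB = real CARD('b)"
  have NA: "NA \<ge> 1" "NB \<ge> 1" unfolding NA_def NB_def by (simp_all add: Suc_le_eq)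
  define e where "e = xi / (NA * NB + NB)"
  have e: "e > 0" using xi NA unfolding e_def by (simp add: add_pos_pos)
  obtain d where d: "d > 0" "\<forall>x\<in>{0..1::real}. \<forall>y\<in>{0..1}. \<bar>x - y\<bar> < d \<longrightarrow> \<bar>x * ln x - y * ln y\<bar> < e"
    using xlnx_ucont[OF e] by blast
  define eps where "eps = d / NA"
  have eps: "eps > 0" using d NA by (simp add: eps_def)
  have epsd: "eps \<le> d" using d NA unfolding eps_def by (simp add: divide_le_eq mult_le_cancel_left1)
  show ?thesis
  proof (intro exI[of _ eps] conjI eps allI impI)
    fix q q0 :: "'a \<Rightarrow> 'b \<Rightarrow> real"
    assume h: "(\<forall>a b. q a b \<ge> 0 \<and> q0 a b \<ge> 0) \<and> (\<forall>b. (\<Sum>a\<in>UNIV. q a b) \<le> 1 \<and> (\<Sum>a\<in>UNIV. q0 a b) \<le> 1)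
     \<and> (\<forall>a b. \<bar>q a b - q0 a b\<bar> < eps)"
    have nn: "\<And>a b. q a b \<ge> 0" "\<And>a b. q0 a b \<ge> 0" using h by auto
    have le1: "q a b \<le> 1" "q0 a b \<le> 1" for a b
      using member_le_sum[of a UNIV "\<lambda>a. q a b"] member_le_sum[of a UNIV "\<lambda>a. q0 a b"] h nn
      by (auto intro: order_trans)
    have t1: "\<bar>q a b * ln (q a b) - q0 a b * ln (q0 a b)\<bar> < e" for a b
    proof -
      have "\<bar>q a b - q0 a b\<bar> < d"
        using h epsd by (meson less_le_trans)
      then show ?thesis using d(2) nn le1 by auto
    qed
    have t2: "\<bar>(\<Sum>a\<in>UNIV. q a b) * ln (\<Sum>a\<in>UNIV. q a b) - (\<Sum>a\<in>UNIV. q0 a b) * ln (\<Sum>a\<in>UNIV. q0 a b)\<bar> < e" for b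
    proof -
      have "\<bar>(\<Sum>a\<in>UNIV. q a b) - (\<Sum>a\<in>UNIV. q0 a b)\<bar> \<le> (\<Sum>a\<in>UNIV. \<bar>q a b - q0 a b\<bar>)"
        by (simp add: sum_subtractf[symmetric] sum_abs)
      also have "\<dots> < (\<Sum>a\<in>(UNIV::'a set). eps)"
        using h by (intro sum_strict_mono) auto
      also have "\<dots> = d" using NA by (simp add: eps_def NA_def)
      finally have "\<bar>(\<Sum>a\<in>UNIV. q a b) - (\<Sum>a\<in>UNIV. q0 a b)\<bar> < d" .
      moreover have "(\<Sum>a\<in>UNIV. q a b) \<in> {0..1}" "(\<Sum>a\<in>UNIV. q0 a b) \<in> {0..1}"
        using h nn by (auto intro: sum_nonneg)
      ultimately show ?thesis using d(2) by blast
    qed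
    have "condH q - condH q0 = (\<Sum>a\<in>UNIV. \<Sum>b\<in>UNIV. q0 a b * ln (q0 a b) - q a b * ln (q a b))
        + (\<Sum>b\<in>UNIV. (\<Sum>a\<in>UNIV. q a b) * ln (\<Sum>a\<in>UNIV. q a b) - (\<Sum>a\<in>UNIV. q0 a b) * ln (\<Sum>a\<in>UNIV. q0 a b))"
      unfolding condH_alt[of q, OF nn(1)] condH_alt[of q0, OF nn(2)]
      by (simp add: sum_subtractf)
    also have "\<dots> \<le> (\<Sum>a\<in>(UNIV::'a set). \<Sum>b\<in>(UNIV::'b set). e) + (\<Sum>b\<in>(UNIV::'b set). e)"
    proof (intro add_mono sum_mono)
      fix a b show "q0 a b * ln (q0 a b) - q a b * ln (q a b) \<le> e" using t1[of a b] by linarith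
    next
      fix b show "(\<Sum>a\<in>UNIV. q a b) * ln (\<Sum>a\<in>UNIV. q a b) - (\<Sum>a\<in>UNIV. q0 a b) * ln (\<Sum>a\<in>UNIV. q0 a b) \<le> e"
        using t2[of b] by linarith
    qed
    also have "\<dots> = (NA * NB + NB) * e" by (simp add: NA_def NB_def algebra_simps)
    also have "\<dots> = xi"
    proof -
      have "NA * NB + NB > 0" using NA by (simp add: add_pos_pos)
      then show ?thesis by (simp add: e_def)
    qed
    finally show "condH q \<le> condH q0 + xi" by simp
  qed
qed


lemma out_prob_mono:
  assumes W0: "\<And>s a b. W s a b \<ge> 0"
    and imp: "\<And>ys. length ys = length xs \<Longrightarrow> A ys \<Longrightarrow> B ys"
  shows "out_prob W xs ss A \<le> out_prob W xs ss B"
  unfolding out_prob_def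
  by (intro sum_mono) (auto simp: imp W0 prod_nonneg)

lemma out_prob_union:
  assumes W0: "\<And>s a b. W s a b \<ge> 0" and fin: "finite F"
  shows "out_prob W xs ss (\<lambda>ys. \<exists>i\<in>F. A i ys) \<le> (\<Sum>i\<in>F. out_prob W xs ss (A i))"
  using fin
proof (induction F rule: finite_induct)
  case empty then show ?case by (simp add: out_prob_def)
next
  case (insert j F)
  have "out_prob W xs ss (\<lambda>ys. \<exists>i\<in>insert j F. A i ys)
     \<le> out_prob W xs ss (A j) + out_prob W xs ss (\<lambda>ys. \<exists>i\<in>F. A i ys)"
    unfolding out_prob_def sum.distrib[symmetric]
    by (intro sum_mono) (auto simp: W0 prod_nonneg)
  then show ?case using insert by simp
qed

lemma count_list_sum: "real (count_list xs a) = (\<Sum>i<length xs. if xs!i = a then 1 else 0)"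
proof -
  have "count_list xs a = card {i. i < length xs \<and> xs!i = a}"
    by (simp add: count_list_eq_length_filter length_filter_conv_card eq_commute)
  then show ?thesis using card_as_sum by simp
qed

lemma count_list_ycnt: "count_list ys b = ycnt ys b"
  by (simp add: ycnt_def count_list_eq_length_filter length_filter_conv_card eq_commute)

lemma condH_bound:
  fixes q :: "'a::finite \<Rightarrow> 'b::finite \<Rightarrow> real"
  assumes q0: "\<And>a b. q a b \<ge> 0" and q1: "\<And>b. (\<Sum>a\<in>UNIV. q a b) \<le> 1"
  shows "condH q \<le> real CARD('a) * real CARD('b)"
proof -
  have t: "- (if q a b = 0 then 0 else q a b * ln (q a b / (\<Sum>a'\<in>UNIV. q a' b))) \<le> 1" for a b
  proof (cases "q a b = 0")
    case False
    let ?r = "\<Sum>a'\<in>UNIV. q a' b"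
    have qp: "q a b > 0" using False q0[of a b] by simp
    have qr: "q a b \<le> ?r" using member_le_sum[of a UNIV "\<lambda>a. q a b"] q0 by simp
    then have rp: "?r > 0" using qp by simp
    have "- (q a b * ln (q a b / ?r)) = q a b * ln (?r / q a b)"
      using qp rp by (simp add: ln_div algebra_simps)
    also have "\<dots> \<le> q a b * (?r / q a b - 1)"
      using qp rp by (intro mult_left_mono ln_le_minus_one) auto
    also have "\<dots> = ?r - q a b" using qp by (simp add: field_simps)
    also have "\<dots> \<le> 1" using q1[of b] qp by simp
    finally show ?thesis using False by simp
  qed simp
  have "condH q = (\<Sum>a\<in>UNIV. \<Sum>b\<in>UNIV. - (if q a b = 0 then 0 else q a b * ln (q a b / (\<Sum>a'\<in>UNIV. q a' b))))"
    unfolding condH_def by (simp add: sum_negf)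
  also have "\<dots> \<le> (\<Sum>a\<in>(UNIV::'a set). \<Sum>b\<in>(UNIV::'b set). 1)"
    by (intro sum_mono t)
  finally show ?thesis by simp
qed

lemma cond_entropy_condH: "cond_entropy P V = condH (\<lambda>a b. P a * V a b)"
  unfolding cond_entropy_def condH_def out_dist_def by simp

lemma avg_sum:
  assumes "count_list xs a > 0"
  shows "(\<Sum>i<length xs. if xs!i = a then W (ss!i) a b else 0) = real (count_list xs a) * avg_channel W xs ss a b"
  using assms by (simp add: avg_channel_def)

lemma avg_stoch:
  assumes W: "is_AVC W" and cnt: "\<And>a. count_list xs a > 0"
  shows "stochastic (avg_channel W xs ss)"
  unfolding stochastic_def
proof (intro allI conjI)
  fix a b
  show "avg_channel W xs ss a b \<ge> 0"
    unfolding avg_channel_def using W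
    by (intro divide_nonneg_nonneg sum_nonneg) (auto simp: is_AVC_def stochastic_def)
next
  fix a
  have "real (count_list xs a) * (\<Sum>b\<in>UNIV. avg_channel W xs ss a b)
      = (\<Sum>b\<in>UNIV. \<Sum>i<length xs. if xs!i = a then W (ss!i) a b else 0)"
    by (simp add: sum_distrib_left avg_sum[OF cnt])
  also have "\<dots> = (\<Sum>i<length xs. if xs!i = a then (\<Sum>b\<in>UNIV. W (ss!i) a b) else 0)"
    by (subst sum.swap) (intro sum.cong refl, auto)
  also have "\<dots> = (\<Sum>i<length xs. if xs!i = a then 1 else 0)"
    using W unfolding is_AVC_def stochastic_def by (intro sum.cong refl) auto
  also have "\<dots> = real (count_list xs a)" by (simp add: count_list_sum)
  finally show "(\<Sum>b\<in>UNIV. avg_channel W xs ss a b) = 1" using cnt[of a] by simp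
qed

lemma ev_nat:
  assumes "eventually P (at_top :: real filter)"
  shows "\<exists>c0::nat. \<forall>c\<ge>c0. P (real c)"
proof -
  obtain N where N: "\<forall>x\<ge>N. P x" using assms by (auto simp: eventually_at_top_linorder)
  show ?thesis
  proof (intro exI[of _ "nat \<lceil>N\<rceil>"] allI impI)
    fix c :: nat assume "c \<ge> nat \<lceil>N\<rceil>"
    then have "real c \<ge> N" by linarith
    then show "P (real c)" using N by simp
  qed
qed

lemma ev_small:
  fixes f :: "real \<Rightarrow> real"
  assumes "(f \<longlongrightarrow> 0) (at_top :: real filter)" "e > 0"
  shows "eventually (\<lambda>x. f x < e) at_top"
  using order_tendstoD(2)[OF assms(1)] assms(2) by simp


lemma good_chunk:
  fixes W :: "'s::finite \<Rightarrow> 'a::finite \<Rightarrow> 'b::finite \<Rightarrow> real" and P :: "'a \<Rightarrow> real"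
    and x' :: "'a list" and y' :: "'b list" and s' :: "'s list"
  assumes W: "is_AVC W" and pd: "is_pd P" and pos: "\<forall>a. P a > 0" and c: "c \<ge> 1"
    and x': "x' \<in> typeclass_set P c" and y': "length y' = c"
    and VS: "avg_channel W x' s' \<in> S" and Sst: "\<forall>V\<in>S. stochastic V"
    and cont: "\<forall>q q0 :: 'a \<Rightarrow> 'b \<Rightarrow> real.
     (\<forall>a b. q a b \<ge> 0 \<and> q0 a b \<ge> 0) \<and> (\<forall>b. (\<Sum>a\<in>UNIV. q a b) \<le> 1 \<and> (\<Sum>a\<in>UNIV. q0 a b) \<le> 1)
     \<and> (\<forall>a b. \<bar>q a b - q0 a b\<bar> < eps1) \<longrightarrow> condH q \<le> condH q0 + xi"
    and e1: "eps \<le> eps1" and ed: "eps \<le> \<delta> / (real CARD('a) * real CARD('b))"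
    and dev: "\<forall>a b. \<bar>real (jcnt x' y' a b) - real c * P a * avg_channel W x' s' a b\<bar> < real c * eps"
  shows "avg_channel W x' s' \<in> near_channels P S y' \<delta>
     \<and> empH x' y' \<le> Sup (cond_entropy P ` near_channels P S y' \<delta>) + xi"
proof -
  define V where "V = avg_channel W x' s'"
  define q where "q a b = real (jcnt x' y' a b) / real c" for a b
  define q0 where "q0 a b = P a * V a b" for a b
  have cpos: "real c > 0" using c by simp
  have stV: "stochastic V" using VS Sst by (simp add: V_def)
  have V0: "V a b \<ge> 0" for a b using stV by (simp add: stochastic_def)
  have V1: "V a b \<le> 1" for a b
    using stV member_le_sum[of b UNIV "V a"] by (simp add: stochastic_def)
  have P1: "(\<Sum>a\<in>UNIV. P a) = 1" "\<And>a. P a \<ge> 0" using pd by (auto simp: is_pd_def)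
  have dq: "\<bar>q a b - q0 a b\<bar> < eps" for a b
  proof -
    have "\<bar>q a b - q0 a b\<bar> = \<bar>real (jcnt x' y' a b) - real c * P a * V a b\<bar> / real c"
    proof -
      have "q a b - q0 a b = (real (jcnt x' y' a b) - real c * P a * V a b) / real c"
        using cpos by (simp add: q_def q0_def field_simps)
      then show ?thesis using cpos by (simp add: abs_divide)
    qed
    also have "\<dots> < eps" using dev cpos by (simp add: V_def divide_less_eq mult.commute)
    finally show ?thesis .
  qed
  have sq: "(\<Sum>a\<in>UNIV. q a b) = real (ycnt y' b) / real c" for b
    by (simp add: q_def sum_divide_distrib[symmetric] sum_jcnt)
  have ycle: "ycnt y' b \<le> c" for b
  proof -
    have "ycnt y' b \<le> card {..<length y'}" unfolding ycnt_def by (intro card_mono) auto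
    then show ?thesis using y' by simp
  qed
  have sq1: "(\<Sum>a\<in>UNIV. q a b) \<le> 1" for b using sq ycle cpos by simp
  have sq01: "(\<Sum>a\<in>UNIV. q0 a b) \<le> 1" for b
  proof -
    have "(\<Sum>a\<in>UNIV. q0 a b) \<le> (\<Sum>a\<in>UNIV. P a)"
      unfolding q0_def by (intro sum_mono) (use V1 P1 in \<open>auto intro: mult_left_le\<close>)
    then show ?thesis using P1 by simp
  qed
  have condle: "empH x' y' \<le> cond_entropy P V + xi"
  proof -
    have "condH q \<le> condH q0 + xi"
    proof -
      have h1: "\<forall>a b. q a b \<ge> 0 \<and> q0 a b \<ge> 0" using V0 P1 by (simp add: q_def q0_def)
      have h2: "\<forall>b. (\<Sum>a\<in>UNIV. q a b) \<le> 1 \<and> (\<Sum>a\<in>UNIV. q0 a b) \<le> 1" using sq1 sq01 by simp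
      have h3: "\<forall>a b. \<bar>q a b - q0 a b\<bar> < eps1" using dq e1 by (meson less_le_trans)
      show ?thesis using cont h1 h2 h3 by blast
    qed
    moreover have "empH x' y' = condH q" unfolding empH_def q_def using y' by simp
    moreover have "cond_entropy P V = condH q0" unfolding cond_entropy_condH q0_def ..
    ultimately show ?thesis by simp
  qed
  have epos: "eps > 0" using dq[of undefined undefined] by (meson abs_ge_zero le_less_trans)
  have ke: "real CARD('a) * real CARD('b) * eps \<le> \<delta>"
  proof -
    have "real CARD('a) * real CARD('b) > 0" by simp
    then show ?thesis using ed by (simp add: le_divide_eq mult.commute)
  qed
  have tv: "d_TV (seq_type y') (out_dist P V) < \<delta>"
  proof -
    have st: "seq_type y' b = (\<Sum>a\<in>UNIV. q a b)" for b
      using sq y' by (simp add: seq_type_def count_list_ycnt)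
    have od: "out_dist P V b = (\<Sum>a\<in>UNIV. q0 a b)" for b by (simp add: out_dist_def q0_def)
    have "d_TV (seq_type y') (out_dist P V) = (\<Sum>b\<in>UNIV. \<bar>\<Sum>a\<in>UNIV. q a b - q0 a b\<bar>) / 2"
      by (simp add: d_TV_def st od sum_subtractf)
    also have "\<dots> \<le> (\<Sum>b\<in>UNIV. \<Sum>a\<in>UNIV. \<bar>q a b - q0 a b\<bar>) / 2"
      by (intro divide_right_mono sum_mono sum_abs) auto
    also have "\<dots> < (\<Sum>b\<in>(UNIV::'b set). \<Sum>a\<in>(UNIV::'a set). eps) / 2"
      by (intro divide_strict_right_mono sum_strict_mono dq) auto
    also have "\<dots> = real CARD('a) * real CARD('b) * eps / 2" by simp
    also have "\<dots> \<le> \<delta> / 2"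
      using ke by simp
    also have "\<dots> < \<delta>"
    proof -
      have "real CARD('a) * real CARD('b) * eps > 0" using epos by simp
      then show ?thesis using ke by simp
    qed
    finally show ?thesis .
  qed
  have mem: "V \<in> near_channels P S y' \<delta>" using VS tv by (simp add: near_channels_def V_def)
  have bdd: "bdd_above (cond_entropy P ` near_channels P S y' \<delta>)"
    unfolding bdd_above_def
  proof (intro exI[of _ "real CARD('a) * real CARD('b)"] ballI)
    fix h assume "h \<in> cond_entropy P ` near_channels P S y' \<delta>"
    then obtain U where U: "U \<in> S" "h = cond_entropy P U" by (auto simp: near_channels_def)
    have stU: "stochastic U" using U Sst by simp
    have U1: "U a b \<le> 1" for a b
      using stU member_le_sum[of b UNIV "U a"] by (simp add: stochastic_def)
    show "h \<le> real CARD('a) * real CARD('b)"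
      unfolding U cond_entropy_condH
    proof (rule condH_bound)
      show "0 \<le> P a * U a b" for a b using stU P1 by (simp add: stochastic_def)
      show "(\<Sum>a\<in>UNIV. P a * U a b) \<le> 1" for b
      proof -
        have "(\<Sum>a\<in>UNIV. P a * U a b) \<le> (\<Sum>a\<in>UNIV. P a)"
          by (intro sum_mono) (use U1 P1 in \<open>auto intro: mult_left_le\<close>)
        then show ?thesis using P1 by simp
      qed
    qed
  qed
  have "cond_entropy P V \<le> Sup (cond_entropy P ` near_channels P S y' \<delta>)"
    using mem bdd by (intro cSup_upper) auto
  then show ?thesis using mem condle unfolding V_def by simp
qed


lemma sum_chunk_shift:
  fixes F :: "nat \<Rightarrow> real"
  assumes m: "m < M"
  shows "(\<Sum>t<M*c. if t \<in> {m*c..<m*c+c} then F t else 0) = (\<Sum>i<c. F (m*c+i))"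
proof -
  have sub: "{m*c..<m*c+c} \<subseteq> {..<M*c}"
  proof -
    have "m * c + c \<le> M * c" using m by (metis add.commute mult_Suc less_eq_Suc_le mult_le_mono1)
    then show ?thesis by auto
  qed
  have "(\<Sum>t<M*c. if t \<in> {m*c..<m*c+c} then F t else 0) = (\<Sum>t\<in>{m*c..<m*c+c}. F t)"
  proof -
    have "(\<Sum>t<M*c. if t \<in> {m*c..<m*c+c} then F t else 0) = sum F ({..<M*c} \<inter> {m*c..<m*c+c})"
      using sum.inter_restrict[of "{..<M*c}" F "{m*c..<m*c+c}"] by simp
    also have "{..<M*c} \<inter> {m*c..<m*c+c} = {m*c..<m*c+c}" using sub by blast
    finally show ?thesis .
  qed
  moreover have eqI: "{m*c..<m*c+c} = (\<lambda>i. m*c+i) ` {..<c}"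
  proof (intro set_eqI iffI)
    fix x assume "x \<in> {m*c..<m*c+c}"
    then have "x = m*c + (x - m*c)" "x - m*c < c" by auto
    then show "x \<in> (\<lambda>i. m*c+i) ` {..<c}" by (metis imageI lessThan_iff)
  qed auto
  moreover have "(\<Sum>t\<in>(\<lambda>i. m*c+i) ` {..<c}. F t) = (\<Sum>i<c. F (m*c+i))"
    by (subst sum.reindex) (auto simp: inj_on_def)
  ultimately show ?thesis by simp
qed

lemma bad_bound:
  fixes W :: "'s::finite \<Rightarrow> 'a::finite \<Rightarrow> 'b::finite \<Rightarrow> real"
  assumes W: "is_AVC W" and lx: "length xs = M * c" and ls: "length ss = M * c" and m: "m < M"
    and cnt: "count_list (chunk c m xs) a > 0" and e: "0 < eps" "eps \<le> 1"
    and sg: "sg = 1 \<or> sg = -1"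
  shows "out_prob W xs ss (\<lambda>ys. real c * eps \<le> sg * (real (jcnt (chunk c m xs) (chunk c m ys) a b)
      - real (count_list (chunk c m xs) a) * avg_channel W (chunk c m xs) (chunk c m ss) a b))
    \<le> exp (- (real c * eps^2 / 16))"
proof -
  define I where "I = {m*c..<m*c+c}"
  define p where "p t y = W (ss!t) (xs!t) y" for t y
  define g where "g t y = sg * (if t \<in> I \<and> xs!t = a \<and> y = b then 1 else 0)" for t y
  define lam where "lam = eps / 8"
  have p0: "p t y \<ge> 0" for t y using W by (simp add: p_def is_AVC_def stochastic_def)
  have p1: "(\<Sum>y\<in>UNIV. p t y) = 1" for t using W by (simp add: p_def is_AVC_def stochastic_def)
  have g1: "\<bar>g t y\<bar> \<le> 1" for t y using sg by (auto simp: g_def)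
  have gI: "t \<notin> I \<Longrightarrow> g t y = 0" for t y by (simp add: g_def)
  have lx': "length (chunk c m xs) = c" using chunk_length[OF m lx] .
  have ls': "length (chunk c m ss) = c" using chunk_length[OF m ls] .
  have key: "(\<Sum>t<M*c. g t (ys!t) - (\<Sum>y\<in>UNIV. p t y * g t y))
      = sg * (real (jcnt (chunk c m xs) (chunk c m ys) a b)
      - real (count_list (chunk c m xs) a) * avg_channel W (chunk c m xs) (chunk c m ss) a b)"
    if ly: "length ys = M * c" for ys
  proof -
    have ly': "length (chunk c m ys) = c" using chunk_length[OF m ly] .
    have s1: "(\<Sum>t<M*c. g t (ys!t)) = sg * real (jcnt (chunk c m xs) (chunk c m ys) a b)"
    proof -
      have "(\<Sum>t<M*c. g t (ys!t)) = sg * (\<Sum>t<M*c. if t \<in> I then (if xs!t = a \<and> ys!t = b then 1 else 0) else 0)"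
        by (simp add: g_def sum_distrib_left if_distrib cong: if_cong) (intro sum.cong refl, auto)
      also have "\<dots> = sg * (\<Sum>i<c. if xs!(m*c+i) = a \<and> ys!(m*c+i) = b then 1 else 0)"
        unfolding I_def by (subst sum_chunk_shift[OF m]) simp
      also have "\<dots> = sg * real (jcnt (chunk c m xs) (chunk c m ys) a b)"
        unfolding jcnt_sum ly' using chunk_nth[OF m lx] chunk_nth[OF m ly] by simp
      finally show ?thesis .
    qed
    have s2: "(\<Sum>t<M*c. \<Sum>y\<in>UNIV. p t y * g t y)
      = sg * (real (count_list (chunk c m xs) a) * avg_channel W (chunk c m xs) (chunk c m ss) a b)"
    proof -
      have "(\<Sum>t<M*c. \<Sum>y\<in>UNIV. p t y * g t y) = sg * (\<Sum>t<M*c. if t \<in> I then (if xs!t = a then W (ss!t) a b else 0) else 0)"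
        unfolding sum_distrib_left
      proof (intro sum.cong refl)
        fix t
        show "(\<Sum>y\<in>UNIV. p t y * g t y) = sg * (if t \<in> I then (if xs!t = a then W (ss!t) a b else 0) else 0)"
        proof -
          have "p t y * g t y = (if t \<in> I then (if xs!t = a then (if y = b then sg * W (ss!t) a b else 0) else 0) else 0)" for y
            by (auto simp: g_def p_def)
          then show ?thesis by simp
        qed
      qed
      also have "\<dots> = sg * (\<Sum>i<c. if xs!(m*c+i) = a then W (ss!(m*c+i)) a b else 0)"
        unfolding I_def by (subst sum_chunk_shift[OF m]) simp
      also have "(\<Sum>i<c. if xs!(m*c+i) = a then W (ss!(m*c+i)) a b else 0)
          = (\<Sum>i<length (chunk c m xs). if chunk c m xs ! i = a then W (chunk c m ss ! i) a b else 0)"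
        unfolding lx' by (intro sum.cong refl) (auto simp: chunk_nth[OF m lx] chunk_nth[OF m ls])
      also have "\<dots> = real (count_list (chunk c m xs) a) * avg_channel W (chunk c m xs) (chunk c m ss) a b"
        by (rule avg_sum[OF cnt])
      finally show ?thesis .
    qed
    show ?thesis using s1 s2 by (simp add: sum_subtractf algebra_simps)
  qed
  have "out_prob W xs ss (\<lambda>ys. real c * eps \<le> sg * (real (jcnt (chunk c m xs) (chunk c m ys) a b)
      - real (count_list (chunk c m xs) a) * avg_channel W (chunk c m xs) (chunk c m ss) a b))
    = (\<Sum>ys\<in>{ys. length ys = M*c}.
      if (\<Sum>t<M*c. g t (ys!t) - (\<Sum>y\<in>UNIV. p t y * g t y)) \<ge> real c * eps then \<Prod>t<M*c. p t (ys!t) else 0)"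
    unfolding out_prob_def lx
  proof (intro sum.cong refl)
    fix ys :: "'b list" assume "ys \<in> {ys. length ys = M * c}"
    then have ly: "length ys = M * c" by simp
    show "(if real c * eps \<le> sg * (real (jcnt (chunk c m xs) (chunk c m ys) a b)
      - real (count_list (chunk c m xs) a) * avg_channel W (chunk c m xs) (chunk c m ss) a b)
      then \<Prod>t<M*c. W (ss!t) (xs!t) (ys!t) else 0) =
      (if (\<Sum>t<M*c. g t (ys!t) - (\<Sum>y\<in>UNIV. p t y * g t y)) \<ge> real c * eps then \<Prod>t<M*c. p t (ys!t) else 0)"
      unfolding key[OF ly] by (simp add: p_def)
  qed
  also have "\<dots> \<le> exp (4 * lam^2 * card (I \<inter> {..<M*c}) - lam * (real c * eps))"
    by (rule chernoff[OF p0 p1 g1 gI]) (use e in \<open>auto simp: lam_def\<close>)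
  also have "\<dots> \<le> exp (4 * lam^2 * real c - lam * (real c * eps))"
  proof -
    have "card (I \<inter> {..<M*c}) \<le> card I" by (intro card_mono) (auto simp: I_def)
    then have "real (card (I \<inter> {..<M*c})) \<le> real c" by (simp add: I_def)
    then have "4 * lam^2 * real (card (I \<inter> {..<M*c})) \<le> 4 * lam^2 * real c"
      by (intro mult_left_mono) auto
    then show ?thesis by simp
  qed
  also have "4 * lam^2 * real c - lam * (real c * eps) = - (real c * eps^2 / 16)"
    by (simp add: lam_def power2_eq_square field_simps)
  finally show ?thesis .
qed


lemma c0_exists:
  fixes NA K xi e L :: real
  assumes xi: "xi > 0" and e: "e > 0" and NA: "NA > 0" and K: "K > 0"
  shows "\<exists>c0::nat. \<forall>c\<ge>c0. real c \<ge> 1 \<and> NA * (1 + ln (real c)) \<le> real c * xi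
     \<and> K * ln (real c + 1) \<le> real c * xi / 2 \<and> ln L \<le> real c * e / 32"
proof -
  have t1: "((\<lambda>x::real. (1 + ln x) / x) \<longlongrightarrow> 0) at_top" by real_asymp
  have t2: "((\<lambda>x::real. ln (x + 1) / x) \<longlongrightarrow> 0) at_top" by real_asymp
  have ev: "eventually (\<lambda>x. x \<ge> 1 \<and> (1 + ln x) / x < xi / NA \<and> ln (x + 1) / x < xi / (2 * K)
      \<and> x \<ge> 32 * \<bar>ln L\<bar> / e) at_top"
  proof -
    have e1: "eventually (\<lambda>x::real. x \<ge> 1) at_top" by (rule eventually_ge_at_top)
    have e2: "eventually (\<lambda>x. (1 + ln x) / x < xi / NA) at_top"
      using xi NA by (intro ev_small[OF t1]) simp
    have e3: "eventually (\<lambda>x. ln (x + 1) / x < xi / (2 * K)) at_top"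
      using xi K by (intro ev_small[OF t2]) simp
    have e4: "eventually (\<lambda>x::real. x \<ge> 32 * \<bar>ln L\<bar> / e) at_top" by (rule eventually_ge_at_top)
    show ?thesis using e1 e2 e3 e4 by eventually_elim auto
  qed
  have ev': "eventually (\<lambda>x. x \<ge> 1 \<and> NA * (1 + ln x) \<le> x * xi
     \<and> K * ln (x + 1) \<le> x * xi / 2 \<and> ln L \<le> x * e / 32) at_top"
    using ev
  proof (rule eventually_mono)
    fix x assume h: "x \<ge> 1 \<and> (1 + ln x) / x < xi / NA \<and> ln (x + 1) / x < xi / (2 * K)
      \<and> x \<ge> 32 * \<bar>ln L\<bar> / e"
    then have x: "x > 0" by simp
    have "1 + ln x < xi / NA * x" using h x by (simp add: divide_less_eq)
    then have a: "NA * (1 + ln x) \<le> x * xi" using NA by (simp add: field_simps)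
    have "ln (x + 1) < xi / (2 * K) * x" using h x by (simp add: divide_less_eq)
    then have b: "K * ln (x + 1) \<le> x * xi / 2" using K by (simp add: field_simps)
    have "32 * \<bar>ln L\<bar> \<le> x * e" using h e by (simp add: divide_le_eq)
    then have d: "ln L \<le> x * e / 32" by linarith
    show "x \<ge> 1 \<and> NA * (1 + ln x) \<le> x * xi \<and> K * ln (x + 1) \<le> x * xi / 2 \<and> ln L \<le> x * e / 32"
      using h a b d by simp
  qed
  show ?thesis using ev_nat[OF ev'] by simp
qed


theorem lemma5:
  fixes W :: "'s::finite \<Rightarrow> 'a::finite \<Rightarrow> 'b::finite \<Rightarrow> real"
    and P :: "'a \<Rightarrow> real"
    and \<delta> \<xi> :: real
    and v :: nat
  assumes "is_AVC W"
    and "is_pd P"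
    and "\<forall>a. P a > 0"
    and "\<delta> > 0" and "\<xi> > 0"
  shows "\<exists>E2 > 0. \<exists>c0. \<forall>c \<ge> c0. (\<forall>a. \<exists>k::nat. real c * P a = real k) \<longrightarrow>
    (\<forall>Vc :: ('a \<Rightarrow> 'b \<Rightarrow> real) set set.
       finite Vc \<and> card Vc \<le> c ^ v \<and> (\<forall>S\<in>Vc. \<forall>V\<in>S. stochastic V) \<longrightarrow>
     (\<forall>M::nat. \<exists>Dec :: 'b list \<Rightarrow> ('a \<Rightarrow> 'b \<Rightarrow> real) set list \<Rightarrow> 'a list set.
        real (card (concat_type_class P c M)) \<ge> exp (real (M * c) * (entropy P - \<xi>))
      \<and> (\<forall>ys Vs. length ys = M * c \<and> length Vs = M \<and> set Vs \<subseteq> Vc \<longrightarrow>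
           Dec ys Vs \<subseteq> concat_type_class P c M
         \<and> ((\<forall>m<M. near_channels P (Vs ! m) (chunk c m ys) \<delta> \<noteq> {}) \<longrightarrow>
              real (card (Dec ys Vs)) \<le> exp (real c * ((\<Sum>m<M.
                  Sup (cond_entropy P ` near_channels P (Vs ! m) (chunk c m ys) \<delta>)) + real M * \<xi>)))
         \<and> ((\<exists>m<M. near_channels P (Vs ! m) (chunk c m ys) \<delta> = {}) \<longrightarrow> Dec ys Vs = {}))
      \<and> (\<forall>xs\<in>concat_type_class P c M. \<forall>ss :: 's list. \<forall>Vs.
           length ss = M * c \<and> length Vs = M \<and> set Vs \<subseteq> Vc
           \<and> (\<forall>m<M. avg_channel W (chunk c m xs) (chunk c m ss) \<in> Vs ! m) \<longrightarrow>
           out_prob W xs ss (\<lambda>ys. xs \<notin> Dec ys Vs) \<le> real M * exp (- real c * E2))))"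
proof -
  note W = assms(1) and pd = assms(2) and pos = assms(3) and dpos = assms(4) and xpos = assms(5)
  have W0: "\<And>s a b. W s a b \<ge> 0" using W by (simp add: is_AVC_def stochastic_def)
  define NA where "NA = real CARD('a)"
  define NB where "NB = real CARD('b)"
  have NA: "NA > 0" "NB > 0" by (simp_all add: NA_def NB_def)
  obtain eps1 where eps1: "eps1 > 0" "\<forall>q q0 :: 'a \<Rightarrow> 'b \<Rightarrow> real.
     (\<forall>a b. q a b \<ge> 0 \<and> q0 a b \<ge> 0) \<and> (\<forall>b. (\<Sum>a\<in>UNIV. q a b) \<le> 1 \<and> (\<Sum>a\<in>UNIV. q0 a b) \<le> 1)
     \<and> (\<forall>a b. \<bar>q a b - q0 a b\<bar> < eps1) \<longrightarrow> condH q \<le> condH q0 + \<xi>/2"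
    using condH_cont[of "\<xi>/2"] xpos by auto
  define eps where "eps = min (min eps1 (\<delta> / (NA * NB))) 1"
  have eps: "eps > 0" "eps \<le> eps1" "eps \<le> \<delta> / (real CARD('a) * real CARD('b))" "eps \<le> 1"
    using eps1 dpos NA by (auto simp: eps_def NA_def NB_def)
  define E2 where "E2 = eps^2 / 32"
  have E2: "E2 > 0" using eps by (simp add: E2_def)
  obtain c0 :: nat where c0: "\<forall>c\<ge>c0. real c \<ge> 1 \<and> NA * (1 + ln (real c)) \<le> real c * \<xi>
     \<and> (NA * NB) * ln (real c + 1) \<le> real c * \<xi> / 2 \<and> ln (2 * NA * NB) \<le> real c * eps^2 / 32"
    using c0_exists[where K = "NA * NB" and e = "eps^2" and L = "2 * NA * NB" and NA = NA and xi = \<xi>] xpos eps NA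
    by (auto simp: mult_pos_pos)
  have main: "\<exists>Dec :: 'b list \<Rightarrow> ('a \<Rightarrow> 'b \<Rightarrow> real) set list \<Rightarrow> 'a list set.
        real (card (concat_type_class P c M)) \<ge> exp (real (M * c) * (entropy P - \<xi>))
      \<and> (\<forall>ys Vs. length ys = M * c \<and> length Vs = M \<and> set Vs \<subseteq> Vc \<longrightarrow>
           Dec ys Vs \<subseteq> concat_type_class P c M
         \<and> ((\<forall>m<M. near_channels P (Vs ! m) (chunk c m ys) \<delta> \<noteq> {}) \<longrightarrow>
              real (card (Dec ys Vs)) \<le> exp (real c * ((\<Sum>m<M.
                  Sup (cond_entropy P ` near_channels P (Vs ! m) (chunk c m ys) \<delta>)) + real M * \<xi>)))
         \<and> ((\<exists>m<M. near_channels P (Vs ! m) (chunk c m ys) \<delta> = {}) \<longrightarrow> Dec ys Vs = {}))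
      \<and> (\<forall>xs\<in>concat_type_class P c M. \<forall>ss :: 's list. \<forall>Vs.
           length ss = M * c \<and> length Vs = M \<and> set Vs \<subseteq> Vc
           \<and> (\<forall>m<M. avg_channel W (chunk c m xs) (chunk c m ss) \<in> Vs ! m) \<longrightarrow>
           out_prob W xs ss (\<lambda>ys. xs \<notin> Dec ys Vs) \<le> real M * exp (- real c * E2))"
    if cc0: "c \<ge> c0" and intc: "\<forall>a. \<exists>k::nat. real c * P a = real k"
      and Vc: "finite Vc \<and> card Vc \<le> c ^ v \<and> (\<forall>S\<in>Vc. \<forall>V\<in>S. stochastic V)"
    for c :: nat and Vc :: "('a \<Rightarrow> 'b \<Rightarrow> real) set set" and M :: nat
  proof -
    have cc: "real c \<ge> 1" "NA * (1 + ln (real c)) \<le> real c * \<xi>"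
      "(NA * NB) * ln (real c + 1) \<le> real c * \<xi> / 2" "ln (2 * NA * NB) \<le> real c * eps^2 / 32"
      using c0 cc0 by auto
    have c1: "c \<ge> 1" using cc(1) by simp

    have cpos: "real c > 0" using cc(1) by simp
    define T where "T = typeclass_set P c"
    have Tlen: "\<And>m. m < M \<Longrightarrow> T \<subseteq> {x. length x = c}" by (auto simp: T_def typeclass_set_def)
    have Tlow: "exp (real c * (entropy P - \<xi>)) \<le> real (card T)"
    proof -
      have "exp (real c * entropy P - real CARD('a) * (1 + ln (real c))) \<le> real (card T)"
        unfolding T_def by (rule typeclass_card[OF pd pos c1 intc])
      moreover have "real c * (entropy P - \<xi>) \<le> real c * entropy P - real CARD('a) * (1 + ln (real c))"
        using cc(2) by (simp add: NA_def algebra_simps)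
      ultimately show ?thesis by (meson exp_le_cancel_iff order_trans)
    qed
    have conj1: "real (card (concat_type_class P c M)) \<ge> exp (real (M * c) * (entropy P - \<xi>))"
    proof -
      have "concat_type_class P c M = {xs. length xs = M*c \<and> (\<forall>m<M. chunk c m xs \<in> T)}"
        by (simp add: concat_type_class_def T_def)
      then have "card (concat_type_class P c M) = (\<Prod>m<M. card T)"
        using card_chunks[of M "\<lambda>_. T" c, OF Tlen] by simp
      then have "real (card (concat_type_class P c M)) = real (card T) ^ M" by simp
      moreover have "exp (real c * (entropy P - \<xi>)) ^ M \<le> real (card T) ^ M"
        by (intro power_mono Tlow) simp
      moreover have "exp (real c * (entropy P - \<xi>)) ^ M = exp (real (M * c) * (entropy P - \<xi>))"
        by (simp add: exp_of_nat_mult[symmetric] algebra_simps)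
      ultimately show ?thesis by simp
    qed
    define Sm where "Sm ys Vs m = Sup (cond_entropy P ` near_channels P (Vs ! m) (chunk c m ys) \<delta>)"
      for ys :: "'b list" and Vs :: "('a \<Rightarrow> 'b \<Rightarrow> real) set list" and m
    define G where "G ys Vs m = {x'. length x' = c \<and> x' \<in> T \<and> empH x' (chunk c m ys) \<le> Sm ys Vs m + \<xi>/2}"
      for ys :: "'b list" and Vs :: "('a \<Rightarrow> 'b \<Rightarrow> real) set list" and m
    define Dec where "Dec ys Vs = (if (\<forall>m<M. near_channels P (Vs ! m) (chunk c m ys) \<delta> \<noteq> {})
       then {xs. length xs = M*c \<and> (\<forall>m<M. chunk c m xs \<in> G ys Vs m)} else {})"
      for ys :: "'b list" and Vs :: "('a \<Rightarrow> 'b \<Rightarrow> real) set list"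
    have conj2: "Dec ys Vs \<subseteq> concat_type_class P c M
         \<and> ((\<forall>m<M. near_channels P (Vs ! m) (chunk c m ys) \<delta> \<noteq> {}) \<longrightarrow>
              real (card (Dec ys Vs)) \<le> exp (real c * ((\<Sum>m<M.
                  Sup (cond_entropy P ` near_channels P (Vs ! m) (chunk c m ys) \<delta>)) + real M * \<xi>)))
         \<and> ((\<exists>m<M. near_channels P (Vs ! m) (chunk c m ys) \<delta> = {}) \<longrightarrow> Dec ys Vs = {})"
      if ys: "length ys = M * c \<and> length Vs = M \<and> set Vs \<subseteq> Vc" for ys Vs
    proof (intro conjI impI)
      show "Dec ys Vs \<subseteq> concat_type_class P c M"
        by (auto simp: Dec_def G_def T_def concat_type_class_def)
    next
      assume ne: "\<forall>m<M. near_channels P (Vs ! m) (chunk c m ys) \<delta> \<noteq> {}"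
      have Glen: "\<And>m. m < M \<Longrightarrow> G ys Vs m \<subseteq> {x. length x = c}" by (auto simp: G_def)
      have "card (Dec ys Vs) = (\<Prod>m<M. card (G ys Vs m))"
        using ne card_chunks[of M "G ys Vs" c, OF Glen] by (simp add: Dec_def)
      then have "real (card (Dec ys Vs)) = (\<Prod>m<M. real (card (G ys Vs m)))" by simp
      also have "\<dots> \<le> (\<Prod>m<M. exp (real c * (Sm ys Vs m + \<xi>)))"
      proof (intro prod_mono conjI)
        fix m assume m: "m \<in> {..<M}"
        have ly: "length (chunk c m ys) = c" using chunk_length[of m M ys c] m ys by simp
        have "G ys Vs m \<subseteq> {x'::'a list. length x' = c \<and> empH x' (chunk c m ys) \<le> Sm ys Vs m + \<xi>/2}"
          by (auto simp: G_def)
        moreover have "finite {x'::'a list. length x' = c \<and> empH x' (chunk c m ys) \<le> Sm ys Vs m + \<xi>/2}"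
          using finite_len[of c] by (rule rev_finite_subset) auto
        ultimately have "card (G ys Vs m) \<le> card {x'::'a list. length x' = c \<and> empH x' (chunk c m ys) \<le> Sm ys Vs m + \<xi>/2}"
          by (rule card_mono[rotated])
        then have "real (card (G ys Vs m)) \<le> real (card {x'::'a list. length x' = c \<and> empH x' (chunk c m ys) \<le> Sm ys Vs m + \<xi>/2})"
          by simp
        also have "\<dots> \<le> real (Suc c) ^ (CARD('a) * CARD('b)) * exp (real c * (Sm ys Vs m + \<xi>/2))"
          by (rule count_low[OF ly]) (use c1 in simp)
        also have "real (Suc c) ^ (CARD('a) * CARD('b)) \<le> exp (real c * \<xi> / 2)"
        proof -
          have "real (Suc c) ^ (CARD('a) * CARD('b)) = exp (real (CARD('a) * CARD('b)) * ln (real c + 1))"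
          proof -
            have "real (Suc c) ^ (CARD('a) * CARD('b)) = exp (ln (real c + 1)) ^ (CARD('a) * CARD('b))"
              by (simp add: add.commute)
            also have "\<dots> = exp (real (CARD('a) * CARD('b)) * ln (real c + 1))"
              by (rule exp_of_nat_mult[symmetric])
            finally show ?thesis .
          qed
          also have "\<dots> \<le> exp (real c * \<xi> / 2)" using cc(3) by (simp add: NA_def NB_def)
          finally show ?thesis .
        qed
        then have "real (Suc c) ^ (CARD('a) * CARD('b)) * exp (real c * (Sm ys Vs m + \<xi>/2))
            \<le> exp (real c * \<xi> / 2) * exp (real c * (Sm ys Vs m + \<xi>/2))"
          by (intro mult_right_mono) auto
        also have "\<dots> = exp (real c * (Sm ys Vs m + \<xi>))"
          by (simp add: mult_exp_exp algebra_simps)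
        finally show "real (card (G ys Vs m)) \<le> exp (real c * (Sm ys Vs m + \<xi>))" .
      qed simp
      also have "\<dots> = exp (\<Sum>m<M. real c * (Sm ys Vs m + \<xi>))" by (simp add: exp_sum)
      also have "(\<Sum>m<M. real c * (Sm ys Vs m + \<xi>)) = real c * ((\<Sum>m<M.
                  Sup (cond_entropy P ` near_channels P (Vs ! m) (chunk c m ys) \<delta>)) + real M * \<xi>)"
        by (simp add: Sm_def sum_distrib_left sum.distrib algebra_simps)
      finally show "real (card (Dec ys Vs)) \<le> exp (real c * ((\<Sum>m<M.
                  Sup (cond_entropy P ` near_channels P (Vs ! m) (chunk c m ys) \<delta>)) + real M * \<xi>))" .
    next
      assume "\<exists>m<M. near_channels P (Vs ! m) (chunk c m ys) \<delta> = {}"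
      then show "Dec ys Vs = {}" by (auto simp: Dec_def)
    qed
    have conj3: "out_prob W xs ss (\<lambda>ys. xs \<notin> Dec ys Vs) \<le> real M * exp (- real c * E2)"
      if xs: "xs \<in> concat_type_class P c M" and hs: "length ss = M * c \<and> length Vs = M \<and> set Vs \<subseteq> Vc
           \<and> (\<forall>m<M. avg_channel W (chunk c m xs) (chunk c m ss) \<in> Vs ! m)" for xs ss Vs
    proof -
      have lx: "length xs = M * c" and xch: "\<forall>m<M. chunk c m xs \<in> T"
        using xs by (auto simp: concat_type_class_def T_def)
      have ls: "length ss = M * c" and lV: "length Vs = M" and sV: "set Vs \<subseteq> Vc"
        and Vin: "\<forall>m<M. avg_channel W (chunk c m xs) (chunk c m ss) \<in> Vs ! m" using hs by auto
      have cnteq: "real (count_list (chunk c m xs) a) = real c * P a" if "m < M" for m a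
        using xch that by (auto simp: T_def typeclass_set_def)
      have cntpos: "count_list (chunk c m xs) a > 0" if "m < M" for m a
      proof -
        have "real c * P a > 0" using cpos pos by simp
        then show ?thesis using cnteq[OF that, of a] by simp
      qed
      define F where "F = {..<M} \<times> (UNIV::'a set) \<times> (UNIV::'b set) \<times> {1::real, -1}"
      define bad where "bad = (\<lambda>(m,a,b,sg) ys. real c * eps \<le> sg * (real (jcnt (chunk c m xs) (chunk c m ys) a b)
        - real (count_list (chunk c m xs) a) * avg_channel W (chunk c m xs) (chunk c m ss) a b))"
      have finF: "finite F" by (simp add: F_def)
      have incl: "\<exists>i\<in>F. bad i ys" if ly: "length ys = length xs" and nd: "xs \<notin> Dec ys Vs" for ys
      proof (rule ccontr)
        assume nb: "\<not> (\<exists>i\<in>F. bad i ys)"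
        have ly': "length ys = M * c" using ly lx by simp
        have gm: "avg_channel W (chunk c m xs) (chunk c m ss) \<in> near_channels P (Vs ! m) (chunk c m ys) \<delta>
           \<and> empH (chunk c m xs) (chunk c m ys) \<le> Sm ys Vs m + \<xi>/2" if m: "m < M" for m
        proof -
          have dev: "\<forall>a b. \<bar>real (jcnt (chunk c m xs) (chunk c m ys) a b) - real c * P a * avg_channel W (chunk c m xs) (chunk c m ss) a b\<bar> < real c * eps"
          proof (intro allI)
            fix a b
            have n1: "\<not> bad (m,a,b,1) ys" using nb m by (auto simp: F_def)
            have n2: "\<not> bad (m,a,b,-1) ys" using nb m by (auto simp: F_def)
            show "\<bar>real (jcnt (chunk c m xs) (chunk c m ys) a b) - real c * P a * avg_channel W (chunk c m xs) (chunk c m ss) a b\<bar> < real c * eps"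
              using n1 n2 cnteq[OF m, of a] by (simp add: bad_def abs_less_iff mult.assoc)
          qed
          have Sst: "\<forall>V\<in>Vs ! m. stochastic V"
          proof -
            have "Vs ! m \<in> Vc" using sV lV m by (metis nth_mem subsetD)
            then show ?thesis using Vc by blast
          qed
          have x'T: "chunk c m xs \<in> typeclass_set P c" using xch m by (simp add: T_def)
          have ly'': "length (chunk c m ys) = c" using chunk_length[OF m ly'] .
          show ?thesis
            using good_chunk[OF W pd pos c1 x'T ly'' Vin[rule_format, OF m] Sst eps1(2) eps(2) eps(3) dev]
            by (simp add: Sm_def)
        qed
        have "\<forall>m<M. near_channels P (Vs ! m) (chunk c m ys) \<delta> \<noteq> {}" using gm by blast
        moreover have "\<forall>m<M. chunk c m xs \<in> G ys Vs m"
          using gm xch chunk_length[OF _ lx] by (auto simp: G_def)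
        ultimately have "xs \<in> Dec ys Vs" using lx by (simp add: Dec_def)
        then show False using nd by simp
      qed
      have "out_prob W xs ss (\<lambda>ys. xs \<notin> Dec ys Vs) \<le> out_prob W xs ss (\<lambda>ys. \<exists>i\<in>F. bad i ys)"
        by (rule out_prob_mono[OF W0]) (rule incl)
      also have "\<dots> \<le> (\<Sum>i\<in>F. out_prob W xs ss (bad i))"
        by (rule out_prob_union[OF W0 finF])
      also have "\<dots> \<le> (\<Sum>i\<in>F. exp (- (real c * eps^2 / 16)))"
      proof (intro sum_mono)
        fix i assume i: "i \<in> F"
        then obtain m a b sg where i': "i = (m,a,b,sg)" "m < M" "sg = 1 \<or> sg = -1" by (auto simp: F_def)
        show "out_prob W xs ss (bad i) \<le> exp (- (real c * eps^2 / 16))"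
          unfolding i'(1) bad_def using bad_bound[OF W lx ls i'(2) cntpos[OF i'(2)] eps(1) eps(4) i'(3)]
          by simp
      qed
      also have "\<dots> = real M * (NA * (NB * 2)) * exp (- (real c * eps^2 / 16))"
        by (simp add: F_def card_cartesian_product NA_def NB_def)
      also have "\<dots> \<le> real M * exp (- real c * E2)"
      proof -
        have "2 * NA * NB \<le> exp (real c * eps^2 / 32)"
          using cc(4) NA by (metis exp_le_cancel_iff exp_ln mult_pos_pos zero_less_numeral)
        then have "(NA * (NB * 2)) * exp (- (real c * eps^2 / 16)) \<le> exp (real c * eps^2 / 32) * exp (- (real c * eps^2 / 16))"
          by (intro mult_right_mono) (auto simp: algebra_simps)
        also have "\<dots> = exp (- real c * E2)"
          by (simp add: mult_exp_exp E2_def)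
        finally show ?thesis by (simp add: mult.assoc mult_left_mono)
      qed
      finally show ?thesis .
    qed
    show ?thesis
      by (intro exI[of _ Dec] conjI conj1 allI impI ballI conj2 conj3) auto
  qed
  show ?thesis
    apply (rule exI[of _ E2])
    apply (rule conjI[OF E2])
    apply (rule exI[of _ c0])
    apply (intro allI impI)
    apply (rule main)
    apply auto
    done
qed


end
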